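(* Consider the discrete-time Markov system with unknown parameter $W$: $p(x_k\mid x_{0:k-1},w)=T_k(x_k,x_{k-1},w)$ and $p(y_k\mid x_{0:k},\mathcal{Y}_{1:k-1},w)=p_{\mathcal{N}}(y_k\mid\Phi_k(x_k,w),\Gamma)$ with $y_k\in\mathbb{R}^r$, and initial prior $P_0$ on $\mathcal{X}\times\mathcal{W}$ absolutely continuous w.r.t. Lebesgue measure. Let $Q_1,\dots,Q_k$ be approximate posteriors with Lebesgue densities $q_i$, with ELBO $\mathcal{L}_i(Q_i)\ge\epsilon_i$ for all $i\in[1,k]$. Assume $P_i\in\bar{\mathcal{P}}_{i+1}(\mathcal{X}\times\mathcal{W})$ for $i\in[0,k-1]$, $Q_i\in\bar{\mathcal{P}}_{i+1}(\mathcal{X}\times\mathcal{W})$ for $i\in[1,k-1]$, and $Q_i\ll$ Lebesgue for $i\in[1,k]$. Set $s_i=\sqrt{-\frac r2\log(2\pi)-\frac12\log\det\Gamma-\epsilon_i}$. Then for $d\in\{d_{TV},d_H\}$, $$d(P_k,Q_k)\le\sum_{j=1}^{k-1}C_{VI,j}\,s_j+\alpha s_k\qquad\text{and}\qquad d(P_k,Q_k)\le\sum_{j=1}^{k-1}C'_{VI,j}\,s_j+\alpha s_k,$$ where, with $p_{j,k}=p(\mathcal{Y}_{j+1:k}\mid\mathcal{Y}_{1:j})$ and $z_{j,k}=\prod_{i=j+1}^kZ_i(Q_{i-1})$: - $d_{TV}$: $C_{VI,j}=\frac{(2\pi)^{-r(k-j)/2}\det(\Gamma)^{-(k-j)/2}}{\sqrt2\,p_{j,k}}$,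 $C'_{VI,j}=\frac{(2\pi)^{-r(k-j)/2}\det(\Gamma)^{-(k-j)/2}}{\sqrt2\,z_{j,k}}$, $\alpha=\frac1{\sqrt2}$; - $d_H$: $C_{VI,j}=\frac{2^{k-j}(2\pi)^{-r(k-j)/4}\det(\Gamma)^{-(k-j)/4}}{\sqrt{2p_{j,k}}}$, $C'_{VI,j}=\frac{2^{k-j}(2\pi)^{-r(k-j)/4}\det(\Gamma)^{-(k-j)/4}}{\sqrt2\prod_{i=j+1}^k\sqrt{Z_i(Q_{i-1})}}$, $\alpha=\frac1{\sqrt2}$. If moreover $\sup_{(x,w),(x',w')}d_{\mathcal{X}\times\mathcal{W}}((x,w),(x',w'))=D<\infty$, both inequalities also hold for $d=W_1$ with $C_{VI,j}=\frac{D(2\pi)^{-r(k-j)/2}\det(\Gamma)^{-(k-j)/2}}{\sqrt2\,p_{j,k}}$, $C'_{VI,j}=\frac{D(2\pi)^{-r(k-j)/2}\det(\Gamma)^{-(k-j)/2}}{\sqrt2\,z_{j,k}}$, $\alpha=\frac D{\sqrt2}$.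
   Context: $(\mathcal{X}\times\mathcal{W},d_{\mathcal{X}\times\mathcal{W}})$ is a Polish metric space; $\lambda$ is Lebesgue measure on it; $T_k(x_k,x_{k-1},w)$ is a measurable transition density in $x_k$; $p_{\mathcal{N}}(z\mid m,\Gamma)$ is the Gaussian density with mean $m$ and covariance $\Gamma$ (positive definite); $\Phi_k$ is measurable. With $h_i(y_i,x,w)=p_{\mathcal{N}}(y_i\mid\Phi_i(x,w),\Gamma)$: for $\mu\ll\lambda$ with density $\pi$, $\tilde F_i\mu(dx,dw)=h_i(y_i,x,w)(\int T_i(x,x',w)\pi(x',w)dx')dxdw$, evidence $Z_i(\mu)=\tilde F_i\mu(\mathcal{X}\times\mathcal{W})$, posterior $F_i\mu=\tilde F_i\mu/Z_i(\mu)$; exact posteriors $P_i=F_i(P_{i-1})$. Admissible priors $\bar{\mathcal{P}}_i(\mathcal{X}\times\mathcal{W})$: $\mu\ll\lambda$, $\int T_i(x_i,x',w)\pi(x',w)dx'<\infty$ for all $x_i,w$, $0<Z_i(\mu)<\infty$. ELBO: with $q_0$ the density of $P_0$ and $q_i^{*-}(x_i,w)=\int T_i(x_i,x_{i-1},w)q_{i-1}(x_{i-1},w)dx_{i-1}$, $\mathcal{L}_i(Q_i)=\mathbb{E}_{q_i}[\log(p_{\mathcal{N}}(y_i\mid\Phi_i(x_i,w),\Gamma)q_i^{*-}(x_i,w))]-\mathbb{E}_{q_i}[\log q_i(x_i,w)]$. $p(\mathcal{Y}_{j+1:k}\mid\mathcal{Y}_{1:j})=\prod_{i=j+1}^kZ_i(P_{i-1})$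 is the conditional data density. $d_{TV}$, $d_H$, $W_1$ are total variation, Hellinger ($d_H^2=\frac12\int(\sqrt{d\mu/d\nu}-\sqrt{d\mu'/d\nu})^2d\nu$) and 1-Wasserstein distances. *)

theory Defs
  imports "HOL-Probability.Probability"
begin

definition pos_def_mat :: "real^'r^'r \<Rightarrow> bool" where
  "pos_def_mat G \<longleftrightarrow> transpose G = G \<and> (\<forall>v. v \<noteq> 0 \<longrightarrow> v \<bullet> (G *v v) > 0)"

definition gauss_dens :: "real^'r \<Rightarrow> real^'r \<Rightarrow> real^'r^'r \<Rightarrow> real" where
  "gauss_dens z m G =
     (2 * pi) powr (- real CARD('r) / 2) * det G powr (- 1 / 2)
     * exp (- (1 / 2) * ((z - m) \<bullet> (matrix_inv G *v (z - m))))"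

definition lik :: "(nat \<Rightarrow> 'x \<Rightarrow> 'w \<Rightarrow> real^'r) \<Rightarrow> real^'r^'r \<Rightarrow> (nat \<Rightarrow> real^'r)
    \<Rightarrow> nat \<Rightarrow> 'x \<times> 'w \<Rightarrow> real" where
  "lik \<Phi> G y i z = gauss_dens (y i) (\<Phi> i (fst z) (snd z)) G"

definition pred :: "(nat \<Rightarrow> 'x::euclidean_space \<Rightarrow> 'x \<Rightarrow> 'w \<Rightarrow> real) \<Rightarrow> nat
    \<Rightarrow> ('x \<times> 'w \<Rightarrow> real) \<Rightarrow> 'x \<times> 'w \<Rightarrow> ennreal" where
  "pred T i \<pi> z = (\<integral>\<^sup>+ x'. ennreal (T i (fst z) x' (snd z) * \<pi> (x', snd z)) \<partial>lborel)"

definition evid :: "(nat \<Rightarrow> 'x::euclidean_space \<Rightarrow> 'x \<Rightarrow> 'w::euclidean_space \<Rightarrow> real)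
    \<Rightarrow> (nat \<Rightarrow> 'x \<Rightarrow> 'w \<Rightarrow> real^'r) \<Rightarrow> real^'r^'r \<Rightarrow> (nat \<Rightarrow> real^'r)
    \<Rightarrow> nat \<Rightarrow> ('x \<times> 'w \<Rightarrow> real) \<Rightarrow> ennreal" where
  "evid T \<Phi> G y i \<pi> = (\<integral>\<^sup>+ z. ennreal (lik \<Phi> G y i z) * pred T i \<pi> z \<partial>lborel)"

definition post_op :: "(nat \<Rightarrow> 'x::euclidean_space \<Rightarrow> 'x \<Rightarrow> 'w::euclidean_space \<Rightarrow> real)
    \<Rightarrow> (nat \<Rightarrow> 'x \<Rightarrow> 'w \<Rightarrow> real^'r) \<Rightarrow> real^'r^'r \<Rightarrow> (nat \<Rightarrow> real^'r)
    \<Rightarrow> nat \<Rightarrow> ('x \<times> 'w \<Rightarrow> real) \<Rightarrow> 'x \<times> 'w \<Rightarrow> real" where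
  "post_op T \<Phi> G y i \<pi> z =
     lik \<Phi> G y i z * enn2real (pred T i \<pi> z) / enn2real (evid T \<Phi> G y i \<pi>)"

fun exact_post :: "(nat \<Rightarrow> 'x::euclidean_space \<Rightarrow> 'x \<Rightarrow> 'w::euclidean_space \<Rightarrow> real)
    \<Rightarrow> (nat \<Rightarrow> 'x \<Rightarrow> 'w \<Rightarrow> real^'r) \<Rightarrow> real^'r^'r \<Rightarrow> (nat \<Rightarrow> real^'r)
    \<Rightarrow> ('x \<times> 'w \<Rightarrow> real) \<Rightarrow> nat \<Rightarrow> 'x \<times> 'w \<Rightarrow> real" where
  "exact_post T \<Phi> G y p0 0 = p0"
| "exact_post T \<Phi> G y p0 (Suc i) = post_op T \<Phi> G y (Suc i) (exact_post T \<Phi> G y p0 i)"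

definition prob_dens :: "('a::euclidean_space \<Rightarrow> real) \<Rightarrow> bool" where
  "prob_dens \<pi> \<longleftrightarrow> \<pi> \<in> borel_measurable borel \<and> (\<forall>z. 0 \<le> \<pi> z)
      \<and> (\<integral>\<^sup>+ z. ennreal (\<pi> z) \<partial>lborel) = 1"

definition admissible :: "(nat \<Rightarrow> 'x::euclidean_space \<Rightarrow> 'x \<Rightarrow> 'w::euclidean_space \<Rightarrow> real)
    \<Rightarrow> (nat \<Rightarrow> 'x \<Rightarrow> 'w \<Rightarrow> real^'r) \<Rightarrow> real^'r^'r \<Rightarrow> (nat \<Rightarrow> real^'r)
    \<Rightarrow> nat \<Rightarrow> ('x \<times> 'w \<Rightarrow> real) \<Rightarrow> bool" where
  "admissible T \<Phi> G y i \<pi> \<longleftrightarrow> prob_dens \<pi>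
      \<and> (\<forall>x w. pred T i \<pi> (x, w) < \<infinity>)
      \<and> 0 < evid T \<Phi> G y i \<pi> \<and> evid T \<Phi> G y i \<pi> < \<infinity>"

text \<open>ELBO bound \<open>L_i(Q_i) \<ge> \<epsilon>\<close>, where \<open>q\<close> is the sequence of densities with
  \<open>q 0\<close> the density of \<open>P_0\<close>. The ELBO is required to be well defined: on
  \<open>{q_i > 0}\<close> the argument \<open>h_i q_i^{*-}\<close> of the log is positive and finite (a.e.),
  and both expectations are finite.\<close>
definition elbo_ge :: "(nat \<Rightarrow> 'x::euclidean_space \<Rightarrow> 'x \<Rightarrow> 'w::euclidean_space \<Rightarrow> real)
    \<Rightarrow> (nat \<Rightarrow> 'x \<Rightarrow> 'w \<Rightarrow> real^'r) \<Rightarrow> real^'r^'r \<Rightarrow> (nat \<Rightarrow> real^'r)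
    \<Rightarrow> (nat \<Rightarrow> 'x \<times> 'w \<Rightarrow> real) \<Rightarrow> nat \<Rightarrow> real \<Rightarrow> bool" where
  "elbo_ge T \<Phi> G y q i \<epsilon> \<longleftrightarrow>
     (AE z in lborel. 0 < q i z \<longrightarrow> 0 < pred T i (q (i - 1)) z \<and> pred T i (q (i - 1)) z < \<infinity>)
   \<and> integrable lborel (\<lambda>z. q i z * ln (lik \<Phi> G y i z * enn2real (pred T i (q (i - 1)) z)))
   \<and> integrable lborel (\<lambda>z. q i z * ln (q i z))
   \<and> \<epsilon> \<le> (\<integral> z. q i z * ln (lik \<Phi> G y i z * enn2real (pred T i (q (i - 1)) z)) \<partial>lborel)
          - (\<integral> z. q i z * ln (q i z) \<partial>lborel)"

definition dTV :: "'a measure \<Rightarrow> 'a measure \<Rightarrow> real" where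
  "dTV M N = (SUP A \<in> sets M. \<bar>measure M A - measure N A\<bar>)"

definition dH :: "('a::euclidean_space \<Rightarrow> real) \<Rightarrow> ('a \<Rightarrow> real) \<Rightarrow> real" where
  "dH p q = sqrt (1 / 2 * (\<integral> z. (sqrt (p z) - sqrt (q z))\<^sup>2 \<partial>lborel))"

definition couplings :: "'a::topological_space measure \<Rightarrow> 'a measure \<Rightarrow> ('a \<times> 'a) measure set" where
  "couplings M N = {\<gamma>. prob_space \<gamma> \<and> sets \<gamma> = sets (borel \<Otimes>\<^sub>M borel)
      \<and> distr \<gamma> borel fst = M \<and> distr \<gamma> borel snd = N}"

definition W1 :: "('a::topological_space \<Rightarrow> 'a \<Rightarrow> real) \<Rightarrow> 'a measure \<Rightarrow> 'a measure \<Rightarrow> ennreal" where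
  "W1 d M N = (INF \<gamma> \<in> couplings M N. \<integral>\<^sup>+ p. ennreal (d (fst p) (snd p)) \<partial>\<gamma>)"

definition polish_metric :: "('a::topological_space \<Rightarrow> 'a \<Rightarrow> real) \<Rightarrow> bool" where
  "polish_metric d \<longleftrightarrow>
     (\<forall>a b. 0 \<le> d a b) \<and> (\<forall>a b. d a b = 0 \<longleftrightarrow> a = b) \<and> (\<forall>a b. d a b = d b a)
   \<and> (\<forall>a b c. d a c \<le> d a b + d b c)
   \<and> (\<forall>U. open U \<longleftrightarrow> (\<forall>a\<in>U. \<exists>e>0. \<forall>b. d a b < e \<longrightarrow> b \<in> U))
   \<and> (\<forall>s::nat \<Rightarrow> 'a. (\<forall>e>0. \<exists>N. \<forall>m\<ge>N. \<forall>n\<ge>N. d (s m) (s n) < e)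
          \<longrightarrow> (\<exists>l. \<forall>e>0. \<exists>N. \<forall>n\<ge>N. d (s n) l < e))"

end

theory Submission
  imports Defs
begin

definition pd :: "('a::euclidean_space \<Rightarrow> real) \<Rightarrow> bool" where
  "pd p \<longleftrightarrow> p \<in> borel_measurable lborel \<and> (\<forall>z. 0 \<le> p z) \<and> integrable lborel p \<and> integral\<^sup>L lborel p = 1"

lemma pdD:
  assumes "pd p"
  shows "p \<in> borel_measurable lborel" "0 \<le> p z" "integrable lborel p" "integral\<^sup>L lborel p = 1"
  using assms by (auto simp: pd_def)

lemma prob_dens_pd: "prob_dens p \<Longrightarrow> pd p"
  unfolding prob_dens_def pd_def
proof (elim conjE, intro conjI)
  assume m: "p \<in> borel_measurable borel" and nn: "\<forall>z. 0 \<le> p z" and i: "(\<integral>\<^sup>+ z. ennreal (p z) \<partial>lborel) = 1"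
  show "p \<in> borel_measurable lborel" using m by simp
  show "\<forall>z. 0 \<le> p z" by fact
  show "integrable lborel p" using m nn i by (intro integrableI_nonneg) auto
  show "integral\<^sup>L lborel p = 1" using m nn i by (subst integral_eq_nn_integral) auto
qed

definition tv :: "('a::euclidean_space \<Rightarrow> real) \<Rightarrow> ('a \<Rightarrow> real) \<Rightarrow> real" where
  "tv p q = (\<integral> z. max (p z - q z) 0 \<partial>lborel)"

lemma tv_integrable:
  fixes p q :: "'a::euclidean_space \<Rightarrow> real"
  assumes "integrable lborel p" "integrable lborel q"
  shows "integrable lborel (\<lambda>z. max (p z - q z) 0)"
  apply (rule integrable_max)
  using assms by auto

lemma ind_int:
  fixes f :: "'a \<Rightarrow> real"
  shows "integrable M f \<Longrightarrow> A \<in> sets M \<Longrightarrow> integrable M (\<lambda>z. indicator A z * f z)"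
  using integrable_real_mult_indicator[of A M f] by (simp add: mult.commute)

lemma tv_nonneg: "0 \<le> tv p q"
  unfolding tv_def by (intro integral_nonneg_AE) auto

lemma tv_self: "tv p p = 0"
  unfolding tv_def by simp

lemma tv_sym:
  assumes "pd p" "pd q"
  shows "tv p q = tv q p"
proof -
  have ip: "integrable lborel p" and iq: "integrable lborel q" using assms by (auto simp: pd_def)
  have "(\<lambda>z. max (p z - q z) 0) = (\<lambda>z. max (q z - p z) 0 + (p z - q z))" by (auto simp: fun_eq_iff)
  then have "tv p q = (\<integral> z. max (q z - p z) 0 \<partial>lborel) + ((\<integral> z. p z \<partial>lborel) - (\<integral> z. q z \<partial>lborel))"
    unfolding tv_def using ip iq tv_integrable[OF iq ip]
    by (simp add: Bochner_Integration.integral_add Bochner_Integration.integral_diff)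
  then show ?thesis using assms by (simp add: pd_def tv_def)
qed

lemma tv_triangle:
  fixes p q r :: "'a::euclidean_space \<Rightarrow> real"
  assumes "integrable lborel p" "integrable lborel q" "integrable lborel r"
  shows "tv p r \<le> tv p q + tv q r"
proof -
  have "tv p r \<le> (\<integral> z. max (p z - q z) 0 + max (q z - r z) 0 \<partial>lborel)"
    unfolding tv_def using assms
    by (intro integral_mono tv_integrable Bochner_Integration.integrable_add) auto
  also have "\<dots> = tv p q + tv q r"
    unfolding tv_def using assms by (intro Bochner_Integration.integral_add tv_integrable) auto
  finally show ?thesis .
qed

lemma measure_density_pd:
  assumes "pd p" "A \<in> sets lborel"
  shows "measure (density lborel (\<lambda>z. ennreal (p z))) A = (\<integral> z. indicator A z * p z \<partial>lborel)"
proof -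
  have m[measurable]: "p \<in> borel_measurable lborel" using assms by (simp add: pd_def)
  have A[measurable]: "A \<in> sets lborel" by fact
  have A'[measurable]: "A \<in> sets borel" using assms by simp
  have "emeasure (density lborel (\<lambda>z. ennreal (p z))) A = (\<integral>\<^sup>+ z. ennreal (indicator A z * p z) \<partial>lborel)"
    by (subst emeasure_density) (auto intro!: nn_integral_cong simp: indicator_def)
  then show ?thesis
    unfolding measure_def using assms(1)
    by (subst integral_eq_nn_integral) (auto simp: pd_def)
qed

lemma dTV_le_tv:
  assumes p: "pd p" and q: "pd q"
  shows "dTV (density lborel (\<lambda>z. ennreal (p z))) (density lborel (\<lambda>z. ennreal (q z))) \<le> tv p q"
  unfolding dTV_def
proof (rule cSUP_least)
  show "sets (density lborel (\<lambda>z. ennreal (p z))) \<noteq> {}" by auto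
next
  fix A assume "A \<in> sets (density lborel (\<lambda>z. ennreal (p z)))"
  then have A[measurable]: "A \<in> sets lborel" by simp
  then have A'[measurable]: "A \<in> sets borel" by simp
  have ip: "integrable lborel p" and iq: "integrable lborel q" using p q by (auto simp: pd_def)
  have ipA: "integrable lborel (\<lambda>z. indicator A z * p z)"
    using ip by (intro ind_int) auto
  have iqA: "integrable lborel (\<lambda>z. indicator A z * q z)"
    using iq by (intro ind_int) auto
  have d: "measure (density lborel (\<lambda>z. ennreal (p z))) A - measure (density lborel (\<lambda>z. ennreal (q z))) A
      = (\<integral> z. indicator A z * p z - indicator A z * q z \<partial>lborel)"
    using ipA iqA by (simp add: measure_density_pd p q Bochner_Integration.integral_diff)
  have 1: "(\<integral> z. indicator A z * p z - indicator A z * q z \<partial>lborel) \<le> tv p q"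
    unfolding tv_def using ipA iqA tv_integrable[OF ip iq]
    by (intro integral_mono Bochner_Integration.integrable_diff) (auto simp: indicator_def)
  have 2: "- (\<integral> z. indicator A z * p z - indicator A z * q z \<partial>lborel) \<le> tv q p"
  proof -
    have "- (\<integral> z. indicator A z * p z - indicator A z * q z \<partial>lborel) = (\<integral> z. indicator A z * q z - indicator A z * p z \<partial>lborel)"
      using ipA iqA by (simp add: Bochner_Integration.integral_diff)
    also have "\<dots> \<le> tv q p"
      unfolding tv_def using ipA iqA tv_integrable[OF iq ip]
      by (intro integral_mono Bochner_Integration.integrable_diff) (auto simp: indicator_def)
    finally show ?thesis .
  qed
  show "\<bar>measure (density lborel (\<lambda>z. ennreal (p z))) A - measure (density lborel (\<lambda>z. ennreal (q z))) A\<bar> \<le> tv p q"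
    using d 1 2 tv_sym[OF p q] by linarith
qed

definition L2 :: "('a::euclidean_space \<Rightarrow> real) \<Rightarrow> bool" where
  "L2 f \<longleftrightarrow> f \<in> borel_measurable lborel \<and> integrable lborel (\<lambda>z. (f z)\<^sup>2)"

definition N2 :: "('a::euclidean_space \<Rightarrow> real) \<Rightarrow> real" where
  "N2 f = sqrt (\<integral> z. (f z)\<^sup>2 \<partial>lborel)"

lemma disc_aux:
  fixes A B c :: real
  assumes A: "0 \<le> A" and B: "0 \<le> B" and h: "\<And>t. 0 \<le> t\<^sup>2 * A - 2 * t * c + B"
  shows "c \<le> sqrt A * sqrt B"
proof (cases "A = 0")
  case True
  show ?thesis
  proof (rule ccontr)
    assume "\<not> ?thesis"
    then have c: "c > 0" using True by simp
    have "0 \<le> ((B + 1) / (2 * c))\<^sup>2 * A - 2 * ((B + 1) / (2 * c)) * c + B" by (rule h)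
    also have "\<dots> = -1" using True c by (simp add: field_simps)
    finally show False by simp
  qed
next
  case False
  then have Ap: "A > 0" using A by simp
  have "0 \<le> (c / A)\<^sup>2 * A - 2 * (c / A) * c + B" by (rule h)
  also have "\<dots> = B - c\<^sup>2 / A" using Ap by (simp add: field_simps power2_eq_square)
  finally have "c\<^sup>2 \<le> A * B" using Ap by (simp add: field_simps)
  then have "\<bar>c\<bar> \<le> sqrt (A * B)" using real_sqrt_le_mono[of "c\<^sup>2" "A * B"] by simp
  then show ?thesis by (simp add: real_sqrt_mult)
qed

lemma L2_prod_integrable:
  assumes f: "L2 f" and g: "L2 g"
  shows "integrable lborel (\<lambda>z. f z * g z)"
proof (rule Bochner_Integration.integrable_bound)
  show "integrable lborel (\<lambda>z. (f z)\<^sup>2 + (g z)\<^sup>2)" using f g by (auto simp: L2_def)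
  show "(\<lambda>z. f z * g z) \<in> borel_measurable lborel" using f g by (auto simp: L2_def)
  show "AE z in lborel. norm (f z * g z) \<le> norm ((f z)\<^sup>2 + (g z)\<^sup>2)"
  proof (rule AE_I2)
    fix z
    have "0 \<le> (\<bar>f z\<bar> - \<bar>g z\<bar>)\<^sup>2" by simp
    then have "2 * (\<bar>f z\<bar> * \<bar>g z\<bar>) \<le> (f z)\<^sup>2 + (g z)\<^sup>2"
      by (simp add: power2_diff)
    moreover have "0 \<le> \<bar>f z\<bar> * \<bar>g z\<bar>" by simp
    ultimately have "\<bar>f z\<bar> * \<bar>g z\<bar> \<le> (f z)\<^sup>2 + (g z)\<^sup>2"
      by linarith
    then have "\<bar>f z * g z\<bar> \<le> (f z)\<^sup>2 + (g z)\<^sup>2"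
      by (simp add: abs_mult)
    then show "norm (f z * g z) \<le> norm ((f z)\<^sup>2 + (g z)\<^sup>2)" by simp
  qed
qed

lemma L2_intros:
  "L2 f \<Longrightarrow> L2 g \<Longrightarrow> L2 (\<lambda>z. f z + g z)"
  "L2 f \<Longrightarrow> L2 g \<Longrightarrow> L2 (\<lambda>z. f z - g z)"
  "L2 f \<Longrightarrow> L2 (\<lambda>z. c * f z)"
proof -
  assume f: "L2 f" and g: "L2 g"
  have i: "integrable lborel (\<lambda>z. (f z)\<^sup>2 + (g z)\<^sup>2 + 2 * (f z * g z))"
    using f g L2_prod_integrable[OF f g] by (auto simp: L2_def)
  have i2: "integrable lborel (\<lambda>z. (f z)\<^sup>2 + (g z)\<^sup>2 - 2 * (f z * g z))"
    using f g L2_prod_integrable[OF f g] by (auto simp: L2_def)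
  show "L2 (\<lambda>z. f z + g z)"
    using f g i unfolding L2_def by (auto simp: power2_sum algebra_simps)
  show "L2 (\<lambda>z. f z - g z)"
    using f g i2 unfolding L2_def by (auto simp: power2_diff algebra_simps)
next
  assume f: "L2 f"
  then show "L2 (\<lambda>z. c * f z)" unfolding L2_def by (auto simp: power_mult_distrib)
qed

lemma CS_L2:
  assumes f: "L2 f" and g: "L2 g"
  shows "(\<integral> z. f z * g z \<partial>lborel) \<le> N2 f * N2 g"
proof -
  define A where "A = (\<integral> z. (f z)\<^sup>2 \<partial>lborel)"
  define B where "B = (\<integral> z. (g z)\<^sup>2 \<partial>lborel)"
  define c where "c = (\<integral> z. f z * g z \<partial>lborel)"
  have iA: "integrable lborel (\<lambda>z. (f z)\<^sup>2)" and iB: "integrable lborel (\<lambda>z. (g z)\<^sup>2)"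
    using f g by (auto simp: L2_def)
  have ic: "integrable lborel (\<lambda>z. f z * g z)" by (rule L2_prod_integrable[OF f g])
  have "0 \<le> t\<^sup>2 * A - 2 * t * c + B" for t
  proof -
    have "0 \<le> (\<integral> z. (t * f z - g z)\<^sup>2 \<partial>lborel)" by simp
    also have "(\<lambda>z. (t * f z - g z)\<^sup>2) = (\<lambda>z. t\<^sup>2 * (f z)\<^sup>2 - 2 * t * (f z * g z) + (g z)\<^sup>2)"
      by (auto simp: fun_eq_iff power2_diff power_mult_distrib algebra_simps)
    also have "(\<integral> z. t\<^sup>2 * (f z)\<^sup>2 - 2 * t * (f z * g z) + (g z)\<^sup>2 \<partial>lborel) = t\<^sup>2 * A - 2 * t * c + B"
      using iA iB ic unfolding A_def B_def c_def
      by (simp add: Bochner_Integration.integral_add Bochner_Integration.integral_diff)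
    finally show ?thesis .
  qed
  then have "c \<le> sqrt A * sqrt B"
    by (intro disc_aux) (auto simp: A_def B_def)
  then show ?thesis by (simp add: c_def A_def B_def N2_def)
qed

lemma N2_nonneg: "0 \<le> N2 f"
  unfolding N2_def by simp

lemma N2_triangle:
  assumes f: "L2 f" and g: "L2 g"
  shows "N2 (\<lambda>z. f z + g z) \<le> N2 f + N2 g"
proof -
  have iA: "integrable lborel (\<lambda>z. (f z)\<^sup>2)" and iB: "integrable lborel (\<lambda>z. (g z)\<^sup>2)"
    using f g by (auto simp: L2_def)
  have ic: "integrable lborel (\<lambda>z. f z * g z)" by (rule L2_prod_integrable[OF f g])
  have "(\<integral> z. (f z + g z)\<^sup>2 \<partial>lborel) = (\<integral> z. (f z)\<^sup>2 + (g z)\<^sup>2 + 2 * (f z * g z) \<partial>lborel)"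
    by (simp add: power2_sum algebra_simps)
  also have "\<dots> = (\<integral> z. (f z)\<^sup>2 \<partial>lborel) + (\<integral> z. (g z)\<^sup>2 \<partial>lborel) + 2 * (\<integral> z. f z * g z \<partial>lborel)"
    using iA iB ic by (simp add: Bochner_Integration.integral_add)
  also have "\<dots> \<le> (N2 f)\<^sup>2 + (N2 g)\<^sup>2 + 2 * (N2 f * N2 g)"
    using CS_L2[OF f g] by (simp add: N2_def)
  also have "\<dots> = (N2 f + N2 g)\<^sup>2" by (simp add: power2_sum)
  finally have "(\<integral> z. (f z + g z)\<^sup>2 \<partial>lborel) \<le> (N2 f + N2 g)\<^sup>2" .
  then have "N2 (\<lambda>z. f z + g z) \<le> sqrt ((N2 f + N2 g)\<^sup>2)"
    unfolding N2_def by (rule real_sqrt_le_mono)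
  also have "\<dots> = N2 f + N2 g" using N2_nonneg[of f] N2_nonneg[of g] by simp
  finally show ?thesis .
qed

lemma N2_scale: "N2 (\<lambda>z. c * f z) = \<bar>c\<bar> * N2 f"
  unfolding N2_def by (simp add: power_mult_distrib real_sqrt_mult)

lemma N2_mono:
  assumes "L2 g" "f \<in> borel_measurable lborel" "\<And>z. \<bar>f z\<bar> \<le> \<bar>g z\<bar>"
  shows "N2 f \<le> N2 g"
  unfolding N2_def
proof (rule real_sqrt_le_mono, rule integral_mono)
  show "integrable lborel (\<lambda>z. (g z)\<^sup>2)" using assms by (simp add: L2_def)
  show "integrable lborel (\<lambda>z. (f z)\<^sup>2)"
  proof (rule Bochner_Integration.integrable_bound)
    show "integrable lborel (\<lambda>z. (g z)\<^sup>2)" using assms by (simp add: L2_def)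
    show "(\<lambda>z. (f z)\<^sup>2) \<in> borel_measurable lborel" using assms by simp
    show "AE z in lborel. norm ((f z)\<^sup>2) \<le> norm ((g z)\<^sup>2)"
      using assms(3) by (auto intro!: AE_I2 simp: abs_le_square_iff)
  qed
  show "(f z)\<^sup>2 \<le> (g z)\<^sup>2" for z using assms(3)[of z] by (simp add: abs_le_square_iff)
qed

lemma N2_rev_triangle:
  assumes f: "L2 f" and g: "L2 g"
  shows "\<bar>N2 f - N2 g\<bar> \<le> N2 (\<lambda>z. f z - g z)"
proof -
  have fg: "L2 (\<lambda>z. f z - g z)" and gf: "L2 (\<lambda>z. g z - f z)" using f g by (auto intro: L2_intros)
  have "N2 f \<le> N2 (\<lambda>z. f z - g z) + N2 g"
    using N2_triangle[OF fg g] by simp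
  moreover have "N2 g \<le> N2 (\<lambda>z. g z - f z) + N2 f"
    using N2_triangle[OF gf f] by simp
  moreover have "N2 (\<lambda>z. g z - f z) = N2 (\<lambda>z. f z - g z)"
    using N2_scale[of "-1" "\<lambda>z. f z - g z"] by simp
  ultimately show ?thesis by linarith
qed

lemma dH_N2: "dH p q = N2 (\<lambda>z. sqrt (p z) - sqrt (q z)) / sqrt 2"
  unfolding dH_def N2_def by (simp add: real_sqrt_mult real_sqrt_divide)

lemma pd_sqrt_L2: "pd p \<Longrightarrow> L2 (\<lambda>z. sqrt (p z))"
  unfolding L2_def pd_def by auto

lemma dH_triangle:
  assumes "pd p" "pd q" "pd r"
  shows "dH p r \<le> dH p q + dH q r"
proof -
  have a: "L2 (\<lambda>z. sqrt (p z) - sqrt (q z))" "L2 (\<lambda>z. sqrt (q z) - sqrt (r z))"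
    using assms by (auto intro!: L2_intros pd_sqrt_L2)
  have "N2 (\<lambda>z. sqrt (p z) - sqrt (r z)) \<le> N2 (\<lambda>z. sqrt (p z) - sqrt (q z)) + N2 (\<lambda>z. sqrt (q z) - sqrt (r z))"
    using N2_triangle[OF a] by simp
  then show ?thesis unfolding dH_N2 by (simp add: add_divide_distrib[symmetric] divide_right_mono)
qed

lemma dH_nonneg: "0 \<le> dH p q"
  unfolding dH_def by simp

lemma dH_sq:
  assumes "pd p" "pd q"
  shows "(\<integral> z. (sqrt (p z) - sqrt (q z))\<^sup>2 \<partial>lborel) = 2 - 2 * (\<integral> z. sqrt (p z * q z) \<partial>lborel)"
proof -
  have ip: "integrable lborel p" and iq: "integrable lborel q" using assms by (auto simp: pd_def)
  have ipq: "integrable lborel (\<lambda>z. sqrt (p z) * sqrt (q z))"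
    using L2_prod_integrable[OF pd_sqrt_L2 pd_sqrt_L2] assms by auto
  have "(\<lambda>z. (sqrt (p z) - sqrt (q z))\<^sup>2) = (\<lambda>z. p z + q z - 2 * (sqrt (p z) * sqrt (q z)))"
    using assms by (auto simp: fun_eq_iff power2_diff pd_def)
  then have "(\<integral> z. (sqrt (p z) - sqrt (q z))\<^sup>2 \<partial>lborel) = (\<integral> z. p z \<partial>lborel) + (\<integral> z. q z \<partial>lborel) - 2 * (\<integral> z. sqrt (p z) * sqrt (q z) \<partial>lborel)"
    using ip iq ipq by (simp add: Bochner_Integration.integral_add Bochner_Integration.integral_diff)
  then show ?thesis using assms by (simp add: pd_def real_sqrt_mult)
qed

lemma alg_tv:
  fixes Za Zb \<alpha> \<gamma> H t :: real
  assumes Za: "Za > 0" and Zb: "Zb > 0" and g: "\<gamma> \<ge> 0" and d: "Zb - \<gamma> \<ge> 0"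
    and f1: "\<alpha> - \<gamma> \<le> H * t" and f2: "(Za - \<alpha>) - (Zb - \<gamma>) \<ge> - (H * t)"
  shows "\<alpha> / Za - \<gamma> / Zb \<le> H / Za * t"
proof -
  define e1 where "e1 = \<alpha> - \<gamma>"
  define e2 where "e2 = (Za - \<alpha>) - (Zb - \<gamma>)"
  have "\<alpha> * Zb - \<gamma> * Za = e1 * (Zb - \<gamma>) - \<gamma> * e2" unfolding e1_def e2_def by (simp add: algebra_simps)
  also have "\<dots> \<le> (H * t) * (Zb - \<gamma>) + \<gamma> * (H * t)"
  proof -
    have "e1 * (Zb - \<gamma>) \<le> (H * t) * (Zb - \<gamma>)" using f1 d unfolding e1_def by (rule mult_right_mono)
    moreover have "\<gamma> * (- e2) \<le> \<gamma> * (H * t)" using f2 g unfolding e2_def by (intro mult_left_mono) auto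
    ultimately show ?thesis by simp
  qed
  also have "\<dots> = H * t * Zb" by (simp add: algebra_simps)
  finally have "\<alpha> * Zb - \<gamma> * Za \<le> H * t * Zb" .
  then have "(\<alpha> * Zb - \<gamma> * Za) / (Za * Zb) \<le> H * t * Zb / (Za * Zb)"
    using Za Zb by (intro divide_right_mono) auto
  then show ?thesis using Za Zb by (simp add: field_simps)
qed

lemma int_hmult:
  fixes h a :: "'a::euclidean_space \<Rightarrow> real"
  assumes hm: "h \<in> borel_measurable lborel" and h0: "\<And>z. 0 \<le> h z" and hH: "\<And>z. h z \<le> H"
    and a: "integrable lborel a"
  shows "integrable lborel (\<lambda>z. h z * a z)"
proof (rule Bochner_Integration.integrable_bound)
  show "integrable lborel (\<lambda>z. H * a z)" using a by simp
  show "(\<lambda>z. h z * a z) \<in> borel_measurable lborel" using hm a by (auto intro: borel_measurable_integrable)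
  show "AE z in lborel. norm (h z * a z) \<le> norm (H * a z)"
  proof (rule AE_I2)
    fix z
    have "\<bar>h z\<bar> \<le> \<bar>H\<bar>" using h0[of z] hH[of z] by simp
    then show "norm (h z * a z) \<le> norm (H * a z)" by (simp add: abs_mult mult_right_mono)
  qed
qed

lemma bayes_tv:
  fixes h a b :: "'a::euclidean_space \<Rightarrow> real"
  assumes hm: "h \<in> borel_measurable lborel" and h0: "\<And>z. 0 \<le> h z" and hH: "\<And>z. h z \<le> H"
    and a: "pd a" and b: "pd b"
    and Za: "Za = (\<integral> z. h z * a z \<partial>lborel)" "Za > 0"
    and Zb: "Zb = (\<integral> z. h z * b z \<partial>lborel)" "Zb > 0"
  shows "tv (\<lambda>z. h z * a z / Za) (\<lambda>z. h z * b z / Zb) \<le> H / Za * tv a b"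
proof -
  have am[measurable]: "a \<in> borel_measurable lborel" and bm[measurable]: "b \<in> borel_measurable lborel"
    using a b by (auto simp: pd_def)
  note hm[measurable]
  have ia: "integrable lborel a" and ib: "integrable lborel b" using a b by (auto simp: pd_def)
  have iha: "integrable lborel (\<lambda>z. h z * a z)" by (rule int_hmult[OF hm h0 hH ia])
  have ihb: "integrable lborel (\<lambda>z. h z * b z)" by (rule int_hmult[OF hm h0 hH ib])
  define A where "A = {z. h z * b z / Zb < h z * a z / Za}"
  have A[measurable]: "A \<in> sets lborel" unfolding A_def by measurable
  have A'[measurable]: "A \<in> sets borel" using A by simp
  define \<alpha> where "\<alpha> = (\<integral> z. indicator A z * (h z * a z) \<partial>lborel)"
  define \<gamma> where "\<gamma> = (\<integral> z. indicator A z * (h z * b z) \<partial>lborel)"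
  have iAa: "integrable lborel (\<lambda>z. indicator A z * (h z * a z))" using iha by (rule ind_int) simp
  have iAb: "integrable lborel (\<lambda>z. indicator A z * (h z * b z))" using ihb by (rule ind_int) simp
  have Za0: "Za \<noteq> 0" "Zb \<noteq> 0" using Za Zb by auto
  have "tv (\<lambda>z. h z * a z / Za) (\<lambda>z. h z * b z / Zb)
      = (\<integral> z. indicator A z * (h z * a z) / Za - indicator A z * (h z * b z) / Zb \<partial>lborel)"
    unfolding tv_def by (intro Bochner_Integration.integral_cong) (auto simp: A_def indicator_def)
  also have "\<dots> = \<alpha> / Za - \<gamma> / Zb"
    using iAa iAb unfolding \<alpha>_def \<gamma>_def
    by (simp add: Bochner_Integration.integral_diff)
  also have "\<dots> \<le> H / Za * tv a b"
  proof (rule alg_tv)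
    show "Za > 0" "Zb > 0" by fact+
    show "\<gamma> \<ge> 0" unfolding \<gamma>_def using h0 b by (intro integral_nonneg_AE) (auto simp: pd_def)
    have "Zb - \<gamma> = (\<integral> z. h z * b z - indicator A z * (h z * b z) \<partial>lborel)"
      unfolding Zb \<gamma>_def using ihb iAb by (simp add: Bochner_Integration.integral_diff)
    also have "\<dots> \<ge> 0" using h0 b by (intro integral_nonneg_AE) (auto simp: pd_def indicator_def)
    finally show "Zb - \<gamma> \<ge> 0" .
    have "\<alpha> - \<gamma> = (\<integral> z. indicator A z * (h z * a z) - indicator A z * (h z * b z) \<partial>lborel)"
      unfolding \<alpha>_def \<gamma>_def using iAa iAb by (simp add: Bochner_Integration.integral_diff)
    also have "\<dots> \<le> (\<integral> z. H * max (a z - b z) 0 \<partial>lborel)"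
    proof (rule integral_mono)
      show "integrable lborel (\<lambda>z. indicator A z * (h z * a z) - indicator A z * (h z * b z))"
        using iAa iAb by simp
      show "integrable lborel (\<lambda>z. H * max (a z - b z) 0)" using tv_integrable[OF ia ib] by simp
      fix z
      have "indicator A z * (h z * a z) - indicator A z * (h z * b z) = indicator A z * h z * (a z - b z)"
        by (simp add: algebra_simps)
      also have "\<dots> \<le> h z * max (a z - b z) 0"
        using h0[of z] by (auto simp: indicator_def mult_left_mono)
      also have "\<dots> \<le> H * max (a z - b z) 0" using hH[of z] by (simp add: mult_right_mono)
      finally show "indicator A z * (h z * a z) - indicator A z * (h z * b z) \<le> H * max (a z - b z) 0" .
    qed
    also have "\<dots> = H * tv a b" unfolding tv_def by simp
    finally show "\<alpha> - \<gamma> \<le> H * tv a b" .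
    have "(Za - \<alpha>) - (Zb - \<gamma>) = (\<integral> z. (h z * a z - indicator A z * (h z * a z)) - (h z * b z - indicator A z * (h z * b z)) \<partial>lborel)"
      unfolding Za Zb \<alpha>_def \<gamma>_def using iAa iAb iha ihb by (simp add: Bochner_Integration.integral_diff)
    also have "\<dots> \<ge> (\<integral> z. - (H * max (b z - a z) 0) \<partial>lborel)"
    proof (rule integral_mono)
      show "integrable lborel (\<lambda>z. (h z * a z - indicator A z * (h z * a z)) - (h z * b z - indicator A z * (h z * b z)))"
        using iAa iAb iha ihb by simp
      show "integrable lborel (\<lambda>z. - (H * max (b z - a z) 0))" using tv_integrable[OF ib ia] by simp
      fix z
      have e: "(h z * a z - indicator A z * (h z * a z)) - (h z * b z - indicator A z * (h z * b z)) = - ((1 - indicator A z) * h z * (b z - a z))"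
        by (simp add: algebra_simps)
      have "(1 - indicator A z) * h z * (b z - a z) \<le> h z * max (b z - a z) 0"
        using h0[of z] by (auto simp: indicator_def mult_left_mono)
      also have "\<dots> \<le> H * max (b z - a z) 0" using hH[of z] by (simp add: mult_right_mono)
      finally show "- (H * max (b z - a z) 0) \<le> (h z * a z - indicator A z * (h z * a z)) - (h z * b z - indicator A z * (h z * b z))"
        unfolding e by simp
    qed
    also have "(\<integral> z. - (H * max (b z - a z) 0) \<partial>lborel) = - (H * tv b a)" unfolding tv_def by simp
    finally show "(Za - \<alpha>) - (Zb - \<gamma>) \<ge> - (H * tv a b)" using tv_sym[OF a b] by simp
  qed
  finally show ?thesis .
qed

lemma L2_hmult:
  fixes h f :: "'a::euclidean_space \<Rightarrow> real"
  assumes hm: "h \<in> borel_measurable lborel" and h0: "\<And>z. 0 \<le> h z" and hH: "\<And>z. h z \<le> H"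
    and f: "L2 f"
  shows "L2 (\<lambda>z. sqrt (h z) * f z)" "N2 (\<lambda>z. sqrt (h z) * f z) \<le> sqrt H * N2 f"
proof -
  have fm: "f \<in> borel_measurable lborel" and fi: "integrable lborel (\<lambda>z. (f z)\<^sup>2)" using f by (auto simp: L2_def)
  have "integrable lborel (\<lambda>z. h z * (f z)\<^sup>2)" by (rule int_hmult[OF hm h0 hH fi])
  then show L: "L2 (\<lambda>z. sqrt (h z) * f z)" unfolding L2_def using hm fm h0
    by (simp add: power_mult_distrib)
  have H0: "0 \<le> H" using h0[of undefined] hH[of undefined] by simp
  have "N2 (\<lambda>z. sqrt (h z) * f z) \<le> N2 (\<lambda>z. sqrt H * f z)"
  proof (rule N2_mono)
    show "L2 (\<lambda>z. sqrt H * f z)" using f by (rule L2_intros)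
    show "(\<lambda>z. sqrt (h z) * f z) \<in> borel_measurable lborel" using hm fm by simp
    fix z show "\<bar>sqrt (h z) * f z\<bar> \<le> \<bar>sqrt H * f z\<bar>"
      using h0[of z] hH[of z] by (simp add: abs_mult mult_right_mono)
  qed
  also have "\<dots> = sqrt H * N2 f" using N2_scale[of "sqrt H" f] H0 by simp
  finally show "N2 (\<lambda>z. sqrt (h z) * f z) \<le> sqrt H * N2 f" .
qed

lemma bayes_hel:
  fixes h a b :: "'a::euclidean_space \<Rightarrow> real"
  assumes hm: "h \<in> borel_measurable lborel" and h0: "\<And>z. 0 \<le> h z" and hH: "\<And>z. h z \<le> H"
    and a: "pd a" and b: "pd b"
    and Za: "Za = (\<integral> z. h z * a z \<partial>lborel)" "Za > 0"
    and Zb: "Zb = (\<integral> z. h z * b z \<partial>lborel)" "Zb > 0"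
  shows "dH (\<lambda>z. h z * a z / Za) (\<lambda>z. h z * b z / Zb) \<le> 2 * sqrt (H / Za) * dH a b"
proof -
  have am[measurable]: "a \<in> borel_measurable lborel" and bm[measurable]: "b \<in> borel_measurable lborel"
    using a b by (auto simp: pd_def)
  have a0: "0 \<le> a z" "0 \<le> b z" for z using a b by (auto simp: pd_def)
  have H0: "0 \<le> H" using h0[of undefined] hH[of undefined] by simp
  define D where "D = (\<lambda>z. sqrt (a z) - sqrt (b z))"
  have LD: "L2 D" unfolding D_def using a b by (intro L2_intros pd_sqrt_L2)
  have LhD: "L2 (\<lambda>z. sqrt (h z) * D z)" and NhD: "N2 (\<lambda>z. sqrt (h z) * D z) \<le> sqrt H * N2 D"
    using L2_hmult[OF hm h0 hH LD] by auto
  have Lha: "L2 (\<lambda>z. sqrt (h z) * sqrt (a z))" using L2_hmult[OF hm h0 hH pd_sqrt_L2[OF a]] by auto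
  have Lhb: "L2 (\<lambda>z. sqrt (h z) * sqrt (b z))" using L2_hmult[OF hm h0 hH pd_sqrt_L2[OF b]] by auto
  have Nha: "N2 (\<lambda>z. sqrt (h z) * sqrt (a z)) = sqrt Za"
    unfolding N2_def Za using h0 a0 by (simp add: power_mult_distrib)
  have Nhb: "N2 (\<lambda>z. sqrt (h z) * sqrt (b z)) = sqrt Zb"
    unfolding N2_def Zb using h0 a0 by (simp add: power_mult_distrib)
  define c where "c = 1 / sqrt Za - 1 / sqrt Zb"
  have eq: "(\<lambda>z. sqrt (h z * a z / Za) - sqrt (h z * b z / Zb))
      = (\<lambda>z. (1 / sqrt Za) * (sqrt (h z) * D z) + c * (sqrt (h z) * sqrt (b z)))"
    by (auto simp: fun_eq_iff D_def c_def real_sqrt_mult real_sqrt_divide algebra_simps)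
  have "N2 (\<lambda>z. sqrt (h z * a z / Za) - sqrt (h z * b z / Zb))
      \<le> N2 (\<lambda>z. (1 / sqrt Za) * (sqrt (h z) * D z)) + N2 (\<lambda>z. c * (sqrt (h z) * sqrt (b z)))"
    unfolding eq by (intro N2_triangle L2_intros LhD Lhb)
  also have "\<dots> = (1 / sqrt Za) * N2 (\<lambda>z. sqrt (h z) * D z) + \<bar>c\<bar> * sqrt Zb"
    using Za(2) by (simp only: N2_scale Nhb) simp
  also have "\<bar>c\<bar> * sqrt Zb = \<bar>sqrt Za - sqrt Zb\<bar> / sqrt Za"
    using Za(2) Zb(2) by (simp add: c_def field_simps abs_div abs_minus_commute)
  also have "\<bar>sqrt Za - sqrt Zb\<bar> \<le> N2 (\<lambda>z. sqrt (h z) * D z)"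
  proof -
    have "\<bar>sqrt Za - sqrt Zb\<bar> \<le> N2 (\<lambda>z. sqrt (h z) * sqrt (a z) - sqrt (h z) * sqrt (b z))"
      using N2_rev_triangle[OF Lha Lhb] by (simp add: Nha Nhb)
    also have "(\<lambda>z. sqrt (h z) * sqrt (a z) - sqrt (h z) * sqrt (b z)) = (\<lambda>z. sqrt (h z) * D z)"
      by (simp add: D_def fun_eq_iff algebra_simps)
    finally show ?thesis .
  qed
  then have "(1 / sqrt Za) * N2 (\<lambda>z. sqrt (h z) * D z) + \<bar>sqrt Za - sqrt Zb\<bar> / sqrt Za
      \<le> (1 / sqrt Za) * N2 (\<lambda>z. sqrt (h z) * D z) + N2 (\<lambda>z. sqrt (h z) * D z) / sqrt Za"
    using Za(2) by (intro add_left_mono divide_right_mono) auto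
  also have "\<dots> = 2 * N2 (\<lambda>z. sqrt (h z) * D z) / sqrt Za" by simp
  also have "\<dots> \<le> 2 * (sqrt H * N2 D) / sqrt Za"
    using NhD Za(2) by (intro divide_right_mono mult_left_mono) auto
  finally have *: "N2 (\<lambda>z. sqrt (h z * a z / Za) - sqrt (h z * b z / Zb)) \<le> 2 * (sqrt H * N2 D) / sqrt Za" .
  show ?thesis
    unfolding dH_N2 D_def[symmetric]
    using divide_right_mono[OF *, of "sqrt 2"] Za(2) by (simp add: real_sqrt_divide field_simps)
qed

lemma pw1:
  fixes q r \<phi> :: real
  assumes "q > 0" "r > 0"
  shows "q * \<phi> - r * exp \<phi> + q \<le> q * ln q - q * ln r"
proof -
  have pos: "r * exp \<phi> / q > 0" using assms by simp
  have "ln (r * exp \<phi> / q) \<le> r * exp \<phi> / q - 1" using pos by (rule ln_le_minus_one)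
  moreover have "ln (r * exp \<phi> / q) = ln r + \<phi> - ln q"
    using assms by (simp add: ln_div ln_mult)
  ultimately have "ln r + \<phi> - ln q \<le> r * exp \<phi> / q - 1" by simp
  then have "q * (ln r + \<phi> - ln q) \<le> q * (r * exp \<phi> / q - 1)"
    using assms by (intro mult_left_mono) auto
  then show ?thesis using assms by (simp add: algebra_simps)
qed

lemma pw2:
  fixes q r :: real
  assumes "q > 0" "r > 0"
  shows "2 * q - 2 * sqrt (q * r) \<le> q * ln q - q * ln r"
proof -
  have pos: "sqrt (r / q) > 0" using assms by simp
  have "ln (sqrt (r / q)) \<le> sqrt (r / q) - 1" using pos by (rule ln_le_minus_one)
  moreover have "ln (sqrt (r / q)) = (ln r - ln q) / 2"
    using assms by (simp add: ln_sqrt ln_div)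
  ultimately have "(ln r - ln q) / 2 \<le> sqrt (r / q) - 1" by simp
  then have "q * (ln r - ln q) \<le> q * (2 * sqrt (r / q) - 2)"
    using assms by (intro mult_left_mono) auto
  moreover have "q * sqrt (r / q) = sqrt (q * r)"
    using assms by (simp add: real_sqrt_divide real_sqrt_mult field_simps)
  ultimately show ?thesis by (simp add: algebra_simps)
qed

lemma kl_bounds:
  fixes q a h :: "'a::euclidean_space \<Rightarrow> real"
  assumes q: "pd q" and a: "pd a"
    and hm: "h \<in> borel_measurable lborel" and h0: "\<And>z. 0 < h z" and hH: "\<And>z. h z \<le> H"
    and Z: "Z = (\<integral> z. h z * a z \<partial>lborel)" "Z > 0"
    and ae: "AE z in lborel. 0 < q z \<longrightarrow> 0 < a z"
    and i1: "integrable lborel (\<lambda>z. q z * ln (h z * a z))"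
    and i2: "integrable lborel (\<lambda>z. q z * ln (q z))"
    and E: "E = (\<integral> z. q z * ln (h z * a z) \<partial>lborel) - (\<integral> z. q z * ln (q z) \<partial>lborel)"
  shows "2 * (tv q (\<lambda>z. h z * a z / Z))\<^sup>2 \<le> ln Z - E"
    and "(\<integral> z. (sqrt (q z) - sqrt (h z * a z / Z))\<^sup>2 \<partial>lborel) \<le> ln Z - E"
proof -
  define r where "r = (\<lambda>z. h z * a z / Z)"
  have qm[measurable]: "q \<in> borel_measurable lborel" and am[measurable]: "a \<in> borel_measurable lborel"
    using q a by (auto simp: pd_def)
  note hm[measurable]
  have q0: "0 \<le> q z" and a0: "0 \<le> a z" for z using q a by (auto simp: pd_def)
  have iq: "integrable lborel q" and ia: "integrable lborel a" using q a by (auto simp: pd_def)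
  have iha: "integrable lborel (\<lambda>z. h z * a z)"
    by (rule int_hmult[OF hm _ hH ia]) (use h0 less_imp_le in auto)
  have ir: "integrable lborel r" unfolding r_def using iha by simp
  have r0: "0 \<le> r z" for z unfolding r_def using h0[of z] a0[of z] Z(2) by simp
  have rm[measurable]: "r \<in> borel_measurable lborel" unfolding r_def by simp
  have rint: "(\<integral> z. r z \<partial>lborel) = 1" unfolding r_def using Z by simp
  have r: "pd r" unfolding pd_def using rm r0 ir rint by auto
  define K where "K = (\<lambda>z. q z * ln (q z) - q z * ln (h z * a z) + q z * ln Z)"
  have iK: "integrable lborel K" unfolding K_def using i1 i2 iq by simp
  have intK: "(\<integral> z. K z \<partial>lborel) = ln Z - E"
    unfolding K_def E using i1 i2 iq q
    by (simp add: Bochner_Integration.integral_add Bochner_Integration.integral_diff pd_def)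
  have Kr: "K z = q z * ln (q z) - q z * ln (r z)" if "0 < q z" "0 < a z" for z
  proof -
    have "ln (r z) = ln (h z * a z) - ln Z" unfolding r_def using that h0[of z] Z(2) by (simp add: ln_div)
    then have e: "ln (h z * a z) = ln (r z) + ln Z" by simp
    show ?thesis unfolding K_def e by (simp add: algebra_simps)
  qed
  have rpos: "0 < r z" if "0 < a z" for z unfolding r_def using that h0[of z] Z(2) by simp
  have K0: "K z = 0" if "q z = 0" for z unfolding K_def using that by simp
  (* Donsker-Varadhan type bound *)
  have dv: "(\<integral> z. q z * \<phi> z - r z * exp (\<phi> z) + q z \<partial>lborel) \<le> ln Z - E"
    if \<phi>m: "\<phi> \<in> borel_measurable lborel" and iphi: "integrable lborel (\<lambda>z. q z * \<phi> z - r z * exp (\<phi> z) + q z)" for \<phi>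
  proof -
    have "(\<integral> z. q z * \<phi> z - r z * exp (\<phi> z) + q z \<partial>lborel) \<le> (\<integral> z. K z \<partial>lborel)"
    proof (rule integral_mono_AE[OF iphi iK])
      show "AE z in lborel. q z * \<phi> z - r z * exp (\<phi> z) + q z \<le> K z"
        using ae
      proof eventually_elim
        case (elim z)
        show ?case
        proof (cases "q z = 0")
          case True
          then show ?thesis using K0[of z] r0[of z] by simp
        next
          case False
          then have qp: "0 < q z" using q0[of z] by simp
          then have ap: "0 < a z" using elim by simp
          show ?thesis using pw1[OF qp rpos[OF ap], of "\<phi> z"] Kr[OF qp ap] by simp
        qed
      qed
    qed
    then show ?thesis using intK by simp
  qed
  define A where "A = {z. r z < q z}"
  have A[measurable]: "A \<in> sets lborel" unfolding A_def by measurable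
  have A'[measurable]: "A \<in> sets borel" using A by simp
  define \<alpha> where "\<alpha> = (\<integral> z. indicator A z * q z \<partial>lborel)"
  define \<beta> where "\<beta> = (\<integral> z. indicator A z * r z \<partial>lborel)"
  have iAq: "integrable lborel (\<lambda>z. indicator A z * q z)" using iq by (rule ind_int) simp
  have iAr: "integrable lborel (\<lambda>z. indicator A z * r z)" using ir by (rule ind_int) simp
  have t: "tv q r = \<alpha> - \<beta>"
  proof -
    have "tv q r = (\<integral> z. indicator A z * q z - indicator A z * r z \<partial>lborel)"
      unfolding tv_def by (intro Bochner_Integration.integral_cong) (auto simp: A_def indicator_def)
    then show ?thesis using iAq iAr by (simp add: \<alpha>_def \<beta>_def Bochner_Integration.integral_diff)
  qed
  have b0: "0 \<le> \<beta>" unfolding \<beta>_def using r0 by (intro integral_nonneg_AE) auto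
  have tv0: "0 \<le> tv q r" by (rule tv_nonneg)
  define c where "c = 4 * tv q r"
  have c0: "0 \<le> c" using tv0 by (simp add: c_def)
  define D where "D = 1 + \<beta> * (exp c - 1)"
  have Dpos: "0 < D" unfolding D_def using b0 c0 by (smt (verit) mult_nonneg_nonneg one_le_exp_iff)
  define \<kappa> where "\<kappa> = - ln D"
  have "(\<integral> z. q z * (c * indicator A z + \<kappa>) - r z * (exp \<kappa> * (1 + (exp c - 1) * indicator A z)) + q z \<partial>lborel) \<le> ln Z - E"
  proof -
    have e: "exp (c * indicator A z + \<kappa>) = exp \<kappa> * (1 + (exp c - 1) * indicator A z)" for z
      by (simp add: indicator_def exp_add)
    have "(\<integral> z. q z * (c * indicator A z + \<kappa>) - r z * exp (c * indicator A z + \<kappa>) + q z \<partial>lborel) \<le> ln Z - E"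
    proof (rule dv)
      show "(\<lambda>z. c * indicator A z + \<kappa>) \<in> borel_measurable lborel" by measurable
      have "integrable lborel (\<lambda>z. c * (indicator A z * q z) + \<kappa> * q z - (exp \<kappa> * r z + exp \<kappa> * (exp c - 1) * (indicator A z * r z)) + q z)"
        using iq ir iAq iAr by simp
      then show "integrable lborel (\<lambda>z. q z * (c * indicator A z + \<kappa>) - r z * exp (c * indicator A z + \<kappa>) + q z)"
        unfolding e by (rule Bochner_Integration.integrable_cong[THEN iffD1, rotated 2]) (auto simp: algebra_simps)
    qed
    then show ?thesis unfolding e .
  qed
  also have "(\<integral> z. q z * (c * indicator A z + \<kappa>) - r z * (exp \<kappa> * (1 + (exp c - 1) * indicator A z)) + q z \<partial>lborel)
      = (\<integral> z. c * (indicator A z * q z) + \<kappa> * q z - (exp \<kappa> * r z + exp \<kappa> * (exp c - 1) * (indicator A z * r z)) + q z \<partial>lborel)"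
    by (intro Bochner_Integration.integral_cong) (auto simp: algebra_simps)
  also have "\<dots> = c * \<alpha> + \<kappa> - exp \<kappa> * (1 + (exp c - 1) * \<beta>) + 1"
    using iq ir iAq iAr q rint unfolding \<alpha>_def \<beta>_def
    by (simp add: Bochner_Integration.integral_add Bochner_Integration.integral_diff pd_def algebra_simps)
  also have "\<dots> = c * \<alpha> - ln D"
  proof -
    have "exp \<kappa> = inverse D" using Dpos by (simp add: \<kappa>_def exp_minus)
    moreover have "1 + (exp c - 1) * \<beta> = D" by (simp add: D_def algebra_simps)
    ultimately have "exp \<kappa> * (1 + (exp c - 1) * \<beta>) = 1" using Dpos by simp
    then show ?thesis by (simp add: \<kappa>_def)
  qed
  finally have 1: "c * \<alpha> - ln D \<le> ln Z - E" .
  have "-c * \<beta> + ln (1 + \<beta> * (exp c - 1)) \<le> c\<^sup>2 / 8"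
    using Hoeffdings_lemma_aux[OF c0 b0] by simp
  then have "c * (\<alpha> - \<beta>) - c\<^sup>2 / 8 \<le> c * \<alpha> - ln D" unfolding D_def by (simp add: algebra_simps)
  moreover have "c * (\<alpha> - \<beta>) - c\<^sup>2 / 8 = 2 * (tv q r)\<^sup>2" unfolding c_def t by (simp add: power2_eq_square field_simps)
  ultimately show "2 * (tv q (\<lambda>z. h z * a z / Z))\<^sup>2 \<le> ln Z - E" using 1 unfolding r_def by simp
  have isq: "integrable lborel (\<lambda>z. sqrt (q z * r z))"
    using L2_prod_integrable[OF pd_sqrt_L2[OF q] pd_sqrt_L2[OF r]] by (simp add: real_sqrt_mult)
  have "(\<integral> z. 2 * q z - 2 * sqrt (q z * r z) \<partial>lborel) \<le> (\<integral> z. K z \<partial>lborel)"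
  proof (rule integral_mono_AE)
    show "integrable lborel (\<lambda>z. 2 * q z - 2 * sqrt (q z * r z))" using iq isq by simp
    show "integrable lborel K" by fact
    show "AE z in lborel. 2 * q z - 2 * sqrt (q z * r z) \<le> K z"
      using ae
    proof eventually_elim
      case (elim z)
      show ?case
      proof (cases "q z = 0")
        case True
        then show ?thesis using K0[of z] by simp
      next
        case False
        then have qp: "0 < q z" using q0[of z] by simp
        then have ap: "0 < a z" using elim by simp
        show ?thesis using pw2[OF qp rpos[OF ap]] Kr[OF qp ap] by simp
      qed
    qed
  qed
  also have "(\<integral> z. 2 * q z - 2 * sqrt (q z * r z) \<partial>lborel) = 2 - 2 * (\<integral> z. sqrt (q z * r z) \<partial>lborel)"
    using iq isq q by (simp add: Bochner_Integration.integral_diff pd_def)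
  also have "2 - 2 * (\<integral> z. sqrt (q z * r z) \<partial>lborel) = (\<integral> z. (sqrt (q z) - sqrt (r z))\<^sup>2 \<partial>lborel)"
    using dH_sq[OF q r] by simp
  finally show "(\<integral> z. (sqrt (q z) - sqrt (h z * a z / Z))\<^sup>2 \<partial>lborel) \<le> ln Z - E"
    using intK unfolding r_def by simp
qed

locale filt =
  fixes T :: "nat \<Rightarrow> 'x::euclidean_space \<Rightarrow> 'x \<Rightarrow> 'w::euclidean_space \<Rightarrow> real"
  assumes T_meas: "\<And>i. (\<lambda>(x, x', w). T i x x' w) \<in> borel_measurable borel"
  and T_nonneg: "\<And>i x x' w. 0 \<le> T i x x' w"
  and T_dens: "\<And>i x' w. (\<integral>\<^sup>+ x. ennreal (T i x x' w) \<partial>lborel) = 1"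
begin

lemma T_meas3: "(\<lambda>p. T i (fst p) (fst (snd p)) (snd (snd p))) \<in> borel_measurable (borel \<Otimes>\<^sub>M borel \<Otimes>\<^sub>M borel)"
proof -
  have "(\<lambda>p. T i (fst p) (fst (snd p)) (snd (snd p))) = (\<lambda>(x, x', w). T i x x' w)"
    by (auto simp: fun_eq_iff)
  with T_meas[of i] show ?thesis by (simp add: borel_prod)
qed

lemma T_comp[measurable]:
  assumes [measurable]: "a \<in> borel_measurable M" "b \<in> borel_measurable M" "c \<in> borel_measurable M"
  shows "(\<lambda>z. T i (a z) (b z) (c z)) \<in> borel_measurable M"
proof -
  have "(\<lambda>z. (a z, b z, c z)) \<in> measurable M (borel \<Otimes>\<^sub>M borel \<Otimes>\<^sub>M borel)" by measurable
  from measurable_compose[OF this T_meas3] show ?thesis by simp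
qed

lemma pred_total:
  fixes f :: "'x \<times> 'w \<Rightarrow> real"
  assumes f[measurable]: "f \<in> borel_measurable borel"
  shows "(\<integral>\<^sup>+ z. pred T i f z \<partial>lborel) = (\<integral>\<^sup>+ z. ennreal (f z) \<partial>lborel)"
proof -
  define g where "g = (\<lambda>x x' w. ennreal (T i x x' w * f (x', w)))"
  have gm[measurable]: "(\<lambda>p. g (fst p) (fst (snd p)) (snd (snd p))) \<in> borel_measurable (lborel \<Otimes>\<^sub>M lborel \<Otimes>\<^sub>M lborel)"
    unfolding g_def by measurable
  have gm2[measurable]: "(\<lambda>p. g (fst (fst p)) (snd p) (snd (fst p))) \<in> borel_measurable ((lborel \<Otimes>\<^sub>M lborel) \<Otimes>\<^sub>M lborel)"
    unfolding g_def by measurable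
  have gm3[measurable]: "(\<lambda>p. g (fst p) (snd p) w) \<in> borel_measurable (lborel \<Otimes>\<^sub>M lborel)" for w
    unfolding g_def by measurable
  have im[measurable]: "(\<lambda>z. \<integral>\<^sup>+ x'. g (fst z) x' (snd z) \<partial>lborel) \<in> borel_measurable (lborel \<Otimes>\<^sub>M lborel)"
    by (rule lborel.borel_measurable_nn_integral) (simp add: split_beta')
  have "(\<integral>\<^sup>+ z. pred T i f z \<partial>lborel) = (\<integral>\<^sup>+ z. (\<integral>\<^sup>+ x'. g (fst z) x' (snd z) \<partial>lborel) \<partial>(lborel \<Otimes>\<^sub>M lborel))"
    by (simp add: lborel_prod pred_def g_def)
  also have "\<dots> = (\<integral>\<^sup>+ x. \<integral>\<^sup>+ w. (\<integral>\<^sup>+ x'. g x x' w \<partial>lborel) \<partial>lborel \<partial>lborel)"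
    by (subst lborel.nn_integral_fst[symmetric]) simp_all
  also have "\<dots> = (\<integral>\<^sup>+ w. \<integral>\<^sup>+ x. (\<integral>\<^sup>+ x'. g x x' w \<partial>lborel) \<partial>lborel \<partial>lborel)"
    using lborel_pair.Fubini'[of "\<lambda>x w. \<integral>\<^sup>+ x'. g x x' w \<partial>lborel"] im by (simp add: split_beta')
  also have "\<dots> = (\<integral>\<^sup>+ w. \<integral>\<^sup>+ x'. (\<integral>\<^sup>+ x. g x x' w \<partial>lborel) \<partial>lborel \<partial>lborel)"
  proof (rule nn_integral_cong)
    fix w
    show "(\<integral>\<^sup>+ x. (\<integral>\<^sup>+ x'. g x x' w \<partial>lborel) \<partial>lborel) = (\<integral>\<^sup>+ x'. (\<integral>\<^sup>+ x. g x x' w \<partial>lborel) \<partial>lborel)"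
      using lborel_pair.Fubini'[of "\<lambda>x x'. g x x' w"] gm3[of w] by (simp add: split_beta')
  qed
  also have "\<dots> = (\<integral>\<^sup>+ w. \<integral>\<^sup>+ x'. ennreal (f (x', w)) \<partial>lborel \<partial>lborel)"
  proof (intro nn_integral_cong)
    fix w x'
    have "(\<integral>\<^sup>+ x. g x x' w \<partial>lborel) = (\<integral>\<^sup>+ x. ennreal (T i x x' w) * ennreal (f (x', w)) \<partial>lborel)"
      unfolding g_def using T_nonneg by (simp add: ennreal_mult')
    also have "\<dots> = (\<integral>\<^sup>+ x. ennreal (T i x x' w) \<partial>lborel) * ennreal (f (x', w))"
      by (rule nn_integral_multc) measurable
    finally show "(\<integral>\<^sup>+ x. g x x' w \<partial>lborel) = ennreal (f (x', w))" by (simp add: T_dens)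
  qed
  also have "\<dots> = (\<integral>\<^sup>+ z. ennreal (f z) \<partial>(lborel \<Otimes>\<^sub>M lborel))"
  proof -
    have "(\<lambda>z. ennreal (f z)) \<in> borel_measurable (lborel \<Otimes>\<^sub>M lborel)"
      by (simp add: lborel_prod)
    then show ?thesis by (subst lborel_pair.nn_integral_snd[symmetric]) simp_all
  qed
  also have "\<dots> = (\<integral>\<^sup>+ z. ennreal (f z) \<partial>lborel)" by (simp add: lborel_prod)
  finally show ?thesis .
qed

lemma pred_meas[measurable]:
  fixes f :: "'x \<times> 'w \<Rightarrow> real"
  assumes f[measurable]: "f \<in> borel_measurable borel"
  shows "pred T i f \<in> borel_measurable borel"
proof -
  have "(\<lambda>p. ennreal (T i (fst (fst p)) (snd p) (snd (fst p)) * f (snd p, snd (fst p)))) \<in> borel_measurable ((lborel \<Otimes>\<^sub>M lborel) \<Otimes>\<^sub>M lborel)"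
    by measurable
  then have "(\<lambda>z. \<integral>\<^sup>+ x'. ennreal (T i (fst z) x' (snd z) * f (x', snd z)) \<partial>lborel) \<in> borel_measurable (lborel \<Otimes>\<^sub>M lborel)"
    by (intro lborel.borel_measurable_nn_integral) (simp add: split_beta')
  then show ?thesis by (simp add: pred_def[abs_def] lborel_prod)
qed

definition prd :: "nat \<Rightarrow> ('x \<times> 'w \<Rightarrow> real) \<Rightarrow> 'x \<times> 'w \<Rightarrow> real" where
  "prd i f z = enn2real (pred T i f z)"

lemma prd_meas[measurable]:
  fixes f :: "'x \<times> 'w \<Rightarrow> real"
  assumes f[measurable]: "f \<in> borel_measurable borel"
  shows "prd i f \<in> borel_measurable borel"
  unfolding prd_def[abs_def] by measurable

lemma prd_nonneg: "0 \<le> prd i f z"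
  unfolding prd_def by simp

lemma prd_int:
  fixes f :: "'x \<times> 'w \<Rightarrow> real"
  assumes fm: "f \<in> borel_measurable borel" and f0: "\<And>z. 0 \<le> f z" and fi: "integrable lborel f"
    and fin: "\<And>z. pred T i f z < \<infinity>"
  shows "integrable lborel (prd i f)" "(\<integral> z. prd i f z \<partial>lborel) = (\<integral> z. f z \<partial>lborel)"
proof -
  note fm[measurable]
  have e: "(\<integral>\<^sup>+ z. ennreal (prd i f z) \<partial>lborel) = ennreal (\<integral> z. f z \<partial>lborel)"
  proof -
    have "(\<integral>\<^sup>+ z. ennreal (prd i f z) \<partial>lborel) = (\<integral>\<^sup>+ z. pred T i f z \<partial>lborel)"
      using fin by (intro nn_integral_cong) (simp add: prd_def less_top[symmetric])
    also have "\<dots> = (\<integral>\<^sup>+ z. ennreal (f z) \<partial>lborel)" by (rule pred_total[OF fm])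
    also have "\<dots> = ennreal (\<integral> z. f z \<partial>lborel)" using fi f0 by (intro nn_integral_eq_integral) auto
    finally show ?thesis .
  qed
  show i: "integrable lborel (prd i f)"
    by (rule integrableI_nonneg) (use e in \<open>auto simp: prd_nonneg\<close>)
  show "(\<integral> z. prd i f z \<partial>lborel) = (\<integral> z. f z \<partial>lborel)"
    using e by (subst integral_eq_nn_integral) (auto simp: prd_nonneg integral_nonneg_AE f0)
qed

lemma prd_pd:
  fixes f :: "'x \<times> 'w \<Rightarrow> real"
  assumes f: "pd f" and fin: "\<And>z. pred T i f z < \<infinity>"
  shows "pd (prd i f)"
  using prd_int[of f i] f fin unfolding pd_def by (auto simp: prd_nonneg)

lemma prd_eq_integral:
  fixes f :: "'x \<times> 'w \<Rightarrow> real"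
  assumes fm[measurable]: "f \<in> borel_measurable borel" and f0: "\<And>z. 0 \<le> f z" and fin: "pred T i f z < \<infinity>"
  shows "integrable lborel (\<lambda>x'. T i (fst z) x' (snd z) * f (x', snd z))"
    "prd i f z = (\<integral> x'. T i (fst z) x' (snd z) * f (x', snd z) \<partial>lborel)"
proof -
  have m: "(\<lambda>x'. T i (fst z) x' (snd z) * f (x', snd z)) \<in> borel_measurable lborel" by measurable
  have nn: "0 \<le> T i (fst z) x' (snd z) * f (x', snd z)" for x' using T_nonneg f0 by simp
  show "integrable lborel (\<lambda>x'. T i (fst z) x' (snd z) * f (x', snd z))"
    using m nn fin by (intro integrableI_nonneg) (auto simp: pred_def)
  show "prd i f z = (\<integral> x'. T i (fst z) x' (snd z) * f (x', snd z) \<partial>lborel)"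
    using m nn by (subst integral_eq_nn_integral) (auto simp: prd_def pred_def)
qed

lemma pred_mono:
  assumes "\<And>z. f z \<le> g z"
  shows "pred T i f z \<le> pred T i g z"
  unfolding pred_def using assms T_nonneg
  by (intro nn_integral_mono ennreal_leI mult_left_mono) auto

lemma tv_contract:
  fixes \<mu> \<nu> :: "'x \<times> 'w \<Rightarrow> real"
  assumes \<mu>: "pd \<mu>" and \<nu>: "pd \<nu>" and f\<mu>: "\<And>z. pred T i \<mu> z < \<infinity>" and f\<nu>: "\<And>z. pred T i \<nu> z < \<infinity>"
  shows "tv (prd i \<mu>) (prd i \<nu>) \<le> tv \<mu> \<nu>"
proof -
  have \<mu>m[measurable]: "\<mu> \<in> borel_measurable borel" and \<nu>m[measurable]: "\<nu> \<in> borel_measurable borel"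
    using \<mu> \<nu> by (auto simp: pd_def)
  have \<mu>0: "0 \<le> \<mu> z" and \<nu>0: "0 \<le> \<nu> z" for z using pdD(2)[OF \<mu>] pdD(2)[OF \<nu>] by auto
  define g where "g = (\<lambda>z. max (\<mu> z - \<nu> z) 0)"
  have gm[measurable]: "g \<in> borel_measurable borel" unfolding g_def by measurable
  have g0: "0 \<le> g z" for z by (simp add: g_def)
  have gi: "integrable lborel g" unfolding g_def using \<mu> \<nu> by (intro tv_integrable) (auto simp: pd_def)
  have fg: "pred T i g z < \<infinity>" for z
  proof -
    have "g z \<le> \<mu> z" for z using \<mu>0[of z] \<nu>0[of z] by (simp add: g_def)
    then show ?thesis using pred_mono[of g \<mu> i z] f\<mu>[of z] by (meson le_less_trans)
  qed
  have pw: "max (prd i \<mu> z - prd i \<nu> z) 0 \<le> prd i g z" for z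
  proof -
    note I = prd_eq_integral[OF \<mu>m \<mu>0 f\<mu>[of z]] prd_eq_integral[OF \<nu>m \<nu>0 f\<nu>[of z]] prd_eq_integral[OF gm g0 fg[of z]]
    have "prd i \<mu> z - prd i \<nu> z = (\<integral> x'. T i (fst z) x' (snd z) * \<mu> (x', snd z) - T i (fst z) x' (snd z) * \<nu> (x', snd z) \<partial>lborel)"
      using I by (simp add: Bochner_Integration.integral_diff)
    also have "\<dots> \<le> prd i g z"
    proof -
      have "T i (fst z) x' (snd z) * \<mu> (x', snd z) - T i (fst z) x' (snd z) * \<nu> (x', snd z) \<le> T i (fst z) x' (snd z) * g (x', snd z)" for x'
      proof -
        have "T i (fst z) x' (snd z) * (\<mu> (x', snd z) - \<nu> (x', snd z)) \<le> T i (fst z) x' (snd z) * g (x', snd z)"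
          using T_nonneg by (intro mult_left_mono) (auto simp: g_def)
        then show ?thesis by (simp add: right_diff_distrib)
      qed
      then show ?thesis unfolding I(6) using I by (intro integral_mono) auto
    qed
    finally show ?thesis using prd_nonneg[of i g z] by simp
  qed
  have "tv (prd i \<mu>) (prd i \<nu>) \<le> (\<integral> z. prd i g z \<partial>lborel)"
    unfolding tv_def using pw prd_int[OF gm g0 gi fg] prd_pd[OF \<mu> f\<mu>] prd_pd[OF \<nu> f\<nu>]
    by (intro integral_mono tv_integrable) (auto simp: pd_def)
  also have "\<dots> = tv \<mu> \<nu>" using prd_int[OF gm g0 gi fg] by (simp add: tv_def g_def)
  finally show ?thesis .
qed

lemma hel_contract:
  fixes \<mu> \<nu> :: "'x \<times> 'w \<Rightarrow> real"
  assumes \<mu>: "pd \<mu>" and \<nu>: "pd \<nu>" and f\<mu>: "\<And>z. pred T i \<mu> z < \<infinity>" and f\<nu>: "\<And>z. pred T i \<nu> z < \<infinity>"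
  shows "dH (prd i \<mu>) (prd i \<nu>) \<le> dH \<mu> \<nu>"
proof -
  have \<mu>m[measurable]: "\<mu> \<in> borel_measurable borel" and \<nu>m[measurable]: "\<nu> \<in> borel_measurable borel"
    using \<mu> \<nu> by (auto simp: pd_def)
  have \<mu>0: "0 \<le> \<mu> z" and \<nu>0: "0 \<le> \<nu> z" for z using pdD(2)[OF \<mu>] pdD(2)[OF \<nu>] by auto
  define g where "g = (\<lambda>z. sqrt (\<mu> z * \<nu> z))"
  have gm[measurable]: "g \<in> borel_measurable borel" unfolding g_def by measurable
  have g0: "0 \<le> g z" for z using \<mu>0[of z] \<nu>0[of z] by (simp add: g_def)
  have gi: "integrable lborel g" unfolding g_def
    using L2_prod_integrable[OF pd_sqrt_L2[OF \<mu>] pd_sqrt_L2[OF \<nu>]] \<mu>0 \<nu>0 by (simp add: real_sqrt_mult)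
  have cs: "(pred T i g z)\<^sup>2 \<le> pred T i \<mu> z * pred T i \<nu> z" for z
  proof -
    define F where "F = (\<lambda>x'. ennreal (sqrt (T i (fst z) x' (snd z) * \<mu> (x', snd z))))"
    define G where "G = (\<lambda>x'. ennreal (sqrt (T i (fst z) x' (snd z) * \<nu> (x', snd z))))"
    have Fm: "F \<in> borel_measurable lborel" unfolding F_def by measurable
    have Gm: "G \<in> borel_measurable lborel" unfolding G_def by measurable
    have "pred T i g z = (\<integral>\<^sup>+ x'. F x' * G x' \<partial>lborel)"
      unfolding pred_def F_def G_def g_def
    proof (intro nn_integral_cong)
      fix x'
      have "T i (fst z) x' (snd z) * sqrt (\<mu> (x', snd z) * \<nu> (x', snd z))
          = sqrt (T i (fst z) x' (snd z) * \<mu> (x', snd z)) * sqrt (T i (fst z) x' (snd z) * \<nu> (x', snd z))"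
        using T_nonneg[of i "fst z" x' "snd z"] \<mu>0 \<nu>0
        by (simp add: real_sqrt_mult)
      then show "ennreal (T i (fst z) x' (snd z) * sqrt (\<mu> (x', snd z) * \<nu> (x', snd z)))
          = ennreal (sqrt (T i (fst z) x' (snd z) * \<mu> (x', snd z))) * ennreal (sqrt (T i (fst z) x' (snd z) * \<nu> (x', snd z)))"
        using T_nonneg[of i "fst z" x' "snd z"] \<mu>0[of "(x', snd z)"] \<nu>0[of "(x', snd z)"] by (simp add: ennreal_mult)
    qed
    moreover have "(\<integral>\<^sup>+ x'. (F x')\<^sup>2 \<partial>lborel) = pred T i \<mu> z"
      unfolding pred_def F_def
    proof (intro nn_integral_cong)
      fix x'
      have "0 \<le> T i (fst z) x' (snd z) * \<mu> (x', snd z)" using T_nonneg \<mu>0 by simp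
      then show "(ennreal (sqrt (T i (fst z) x' (snd z) * \<mu> (x', snd z))))\<^sup>2 = ennreal (T i (fst z) x' (snd z) * \<mu> (x', snd z))"
        by (simp add: ennreal_power)
    qed
    moreover have "(\<integral>\<^sup>+ x'. (G x')\<^sup>2 \<partial>lborel) = pred T i \<nu> z"
      unfolding pred_def G_def
    proof (intro nn_integral_cong)
      fix x'
      have "0 \<le> T i (fst z) x' (snd z) * \<nu> (x', snd z)" using T_nonneg \<nu>0 by simp
      then show "(ennreal (sqrt (T i (fst z) x' (snd z) * \<nu> (x', snd z))))\<^sup>2 = ennreal (T i (fst z) x' (snd z) * \<nu> (x', snd z))"
        by (simp add: ennreal_power)
    qed
    ultimately show ?thesis using Cauchy_Schwarz_nn_integral[OF Fm Gm] by simp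
  qed
  have fg: "pred T i g z < \<infinity>" for z
  proof -
    have "pred T i \<mu> z * pred T i \<nu> z < \<infinity>" using f\<mu>[of z] f\<nu>[of z]
      by (simp add: ennreal_mult_less_top)
    then have "(pred T i g z)\<^sup>2 < \<infinity>" using cs[of z] by (rule le_less_trans[rotated])
    then show ?thesis by (simp add: power_less_top_ennreal)
  qed
  have pw: "prd i g z \<le> sqrt (prd i \<mu> z * prd i \<nu> z)" for z
  proof -
    have "enn2real ((pred T i g z)\<^sup>2) \<le> enn2real (pred T i \<mu> z * pred T i \<nu> z)"
      using cs[of z] f\<mu>[of z] f\<nu>[of z] by (intro enn2real_mono) (auto simp: ennreal_mult_less_top)
    then have "(prd i g z)\<^sup>2 \<le> prd i \<mu> z * prd i \<nu> z"
      by (simp add: prd_def power2_eq_square enn2real_mult)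
    then show ?thesis using prd_nonneg[of i g z] by (simp add: real_le_rsqrt)
  qed
  have pm: "pd (prd i \<mu>)" and pn: "pd (prd i \<nu>)" using prd_pd \<mu> \<nu> f\<mu> f\<nu> by auto
  have "(\<integral> z. g z \<partial>lborel) = (\<integral> z. prd i g z \<partial>lborel)" using prd_int[OF gm g0 gi fg] by simp
  also have "\<dots> \<le> (\<integral> z. sqrt (prd i \<mu> z * prd i \<nu> z) \<partial>lborel)"
    using pw prd_int[OF gm g0 gi fg]
      L2_prod_integrable[OF pd_sqrt_L2[OF pm] pd_sqrt_L2[OF pn]]
    by (intro integral_mono) (auto simp: real_sqrt_mult)
  finally have bc: "(\<integral> z. sqrt (\<mu> z * \<nu> z) \<partial>lborel) \<le> (\<integral> z. sqrt (prd i \<mu> z * prd i \<nu> z) \<partial>lborel)"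
    by (simp add: g_def)
  show ?thesis unfolding dH_def using dH_sq[OF pm pn] dH_sq[OF \<mu> \<nu>] bc
    by (intro real_sqrt_le_mono) simp
qed

end

lemma emeasure_density_int:
  fixes f :: "'a::euclidean_space \<Rightarrow> real"
  assumes fm: "f \<in> borel_measurable lborel" and f0: "\<And>z. 0 \<le> f z" and fi: "integrable lborel f"
    and A: "A \<in> sets lborel"
  shows "emeasure (density lborel (\<lambda>z. ennreal (f z))) A = ennreal (\<integral> z. indicator A z * f z \<partial>lborel)"
proof -
  note fm[measurable] A[measurable]
  have A'[measurable]: "A \<in> sets borel" using A by simp
  have "emeasure (density lborel (\<lambda>z. ennreal (f z))) A = (\<integral>\<^sup>+ z. ennreal (indicator A z * f z) \<partial>lborel)"
    by (subst emeasure_density) (auto intro!: nn_integral_cong simp: indicator_def)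
  also have "\<dots> = ennreal (\<integral> z. indicator A z * f z \<partial>lborel)"
    using fi f0 by (intro nn_integral_eq_integral ind_int) auto
  finally show ?thesis .
qed

lemma int_ind_le:
  fixes f :: "'a::euclidean_space \<Rightarrow> real"
  assumes f0: "\<And>z. 0 \<le> f z" and fi: "integrable lborel f" and A: "A \<in> sets lborel"
  shows "0 \<le> (\<integral> z. indicator A z * f z \<partial>lborel)" "(\<integral> z. indicator A z * f z \<partial>lborel) \<le> (\<integral> z. f z \<partial>lborel)"
proof -
  have ii: "integrable lborel (\<lambda>z. indicator A z * f z)" using fi A by (rule ind_int)
  show "0 \<le> (\<integral> z. indicator A z * f z \<partial>lborel)" using f0 by (intro integral_nonneg_AE) auto
  show "(\<integral> z. indicator A z * f z \<partial>lborel) \<le> (\<integral> z. f z \<partial>lborel)"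
    using ii fi f0 by (intro integral_mono) (auto simp: indicator_def)
qed

lemma W1_le:
  fixes p q :: "'a::euclidean_space \<Rightarrow> real" and d :: "'a \<Rightarrow> 'a \<Rightarrow> real"
  assumes p: "pd p" and q: "pd q"
    and d0: "\<And>a b. 0 \<le> d a b" and daa: "\<And>a. d a a = 0" and dD: "\<And>a b. d a b \<le> D"
  shows "W1 d (density lborel (\<lambda>z. ennreal (p z))) (density lborel (\<lambda>z. ennreal (q z))) \<le> ennreal (D * tv p q)"
proof -
  have pm[measurable]: "p \<in> borel_measurable lborel" and qm[measurable]: "q \<in> borel_measurable lborel"
    using p q by (auto simp: pd_def)
  have p0: "0 \<le> p z" and q0: "0 \<le> q z" for z using p q by (auto simp: pd_def)
  have ip: "integrable lborel p" and iq: "integrable lborel q" using p q by (auto simp: pd_def)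
  define t where "t = tv p q"
  define c where "c = inverse t"
  define m where "m = (\<lambda>z. min (p z) (q z))"
  define f where "f = (\<lambda>z. c * (p z - m z))"
  define g where "g = (\<lambda>z. q z - m z)"
  have mm[measurable]: "m \<in> borel_measurable lborel" unfolding m_def by measurable
  have fm[measurable]: "f \<in> borel_measurable lborel" unfolding f_def by measurable
  have gm[measurable]: "g \<in> borel_measurable lborel" unfolding g_def by measurable
  have t0: "0 \<le> t" unfolding t_def by (rule tv_nonneg)
  have c0: "0 \<le> c" using t0 by (simp add: c_def)
  have m0: "0 \<le> m z" for z using p0 q0 by (simp add: m_def)
  have f0: "0 \<le> f z" for z using c0 by (simp add: f_def m_def)
  have g0: "0 \<le> g z" for z by (simp add: g_def m_def)
  have pmeq: "(\<lambda>z. p z - m z) = (\<lambda>z. max (p z - q z) 0)" by (auto simp: fun_eq_iff m_def)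
  have qmeq: "(\<lambda>z. q z - m z) = (\<lambda>z. max (q z - p z) 0)" by (auto simp: fun_eq_iff m_def)
  have ipm: "integrable lborel (\<lambda>z. p z - m z)" unfolding pmeq by (rule tv_integrable[OF ip iq])
  have im: "integrable lborel m"
  proof -
    show ?thesis using Bochner_Integration.integrable_diff[OF ip ipm] by simp
  qed
  have iqm: "integrable lborel g" unfolding g_def qmeq by (rule tv_integrable[OF iq ip])
  have if': "integrable lborel f" unfolding f_def using ipm by simp
  have int_pm: "(\<integral> z. p z - m z \<partial>lborel) = t" unfolding pmeq t_def tv_def ..
  have int_g: "(\<integral> z. g z \<partial>lborel) = t" unfolding g_def qmeq t_def using tv_sym[OF p q] by (simp add: tv_def)
  have int_m: "(\<integral> z. m z \<partial>lborel) = 1 - t"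
    using int_pm ip im p by (simp add: Bochner_Integration.integral_diff pd_def)
  define K1 where "K1 = distr (density lborel (\<lambda>z. ennreal (m z))) (borel \<Otimes>\<^sub>M borel) (\<lambda>x. (x, x))"
  define F where "F = density lborel (\<lambda>z. ennreal (f z))"
  define G where "G = density lborel (\<lambda>z. ennreal (g z))"
  define K2 where "K2 = F \<Otimes>\<^sub>M G"
  define K where "K = (\<lambda>b::bool. if b then K1 else K2)"
  define \<gamma> where "\<gamma> = bind (count_space UNIV) K"
  have diagm[measurable]: "(\<lambda>x::'a. (x, x)) \<in> measurable lborel (borel \<Otimes>\<^sub>M borel)" by measurable
  have sK1: "sets K1 = sets (borel \<Otimes>\<^sub>M borel)" by (simp add: K1_def)
  have sK2: "sets K2 = sets (borel \<Otimes>\<^sub>M borel)" unfolding K2_def F_def G_def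
    by (intro sets_pair_measure_cong) auto
  have finG: "finite_measure G"
    unfolding G_def using emeasure_density_int[OF gm g0 iqm, of "space lborel"]
    by (intro finite_measureI) simp
  then interpret G: sigma_finite_measure G by (rule finite_measure.axioms)
  have K2T: "emeasure K2 (A \<times> B) = ennreal (\<integral> z. indicator A z * f z \<partial>lborel) * ennreal (\<integral> z. indicator B z * g z \<partial>lborel)"
    if "A \<in> sets borel" "B \<in> sets borel" for A B
    unfolding K2_def using that
    by (subst G.emeasure_pair_measure_Times) (auto simp: F_def G_def emeasure_density_int[OF fm f0 if'] emeasure_density_int[OF gm g0 iqm])
  have K1T: "emeasure K1 X = ennreal (\<integral> z. indicator ((\<lambda>x. (x, x)) -` X) z * m z \<partial>lborel)"
    if X: "X \<in> sets (borel \<Otimes>\<^sub>M borel)" for X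
  proof -
    have "(\<lambda>x. (x, x)) -` X \<in> sets lborel" using measurable_sets[OF diagm X] by simp
    then show ?thesis unfolding K1_def using X
      by (subst emeasure_distr) (auto simp: emeasure_density_int[OF mm m0 im])
  qed
  have fT: "(\<integral> z. indicator A z * f z \<partial>lborel) * t = (\<integral> z. indicator A z * (p z - m z) \<partial>lborel)"
    if A: "A \<in> sets borel" for A
  proof (cases "t = 0")
    case True
    have "0 \<le> (\<integral> z. indicator A z * (p z - m z) \<partial>lborel)" "(\<integral> z. indicator A z * (p z - m z) \<partial>lborel) \<le> t"
      using int_ind_le[of "\<lambda>z. p z - m z" A] ipm A int_pm by (auto simp: m_def)
    then show ?thesis using True by simp
  next
    case False
    have "(\<integral> z. indicator A z * f z \<partial>lborel) = c * (\<integral> z. indicator A z * (p z - m z) \<partial>lborel)"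
      unfolding f_def by (simp add: mult.left_commute)
    then show ?thesis using False by (simp add: c_def)
  qed
  have fint: "(\<integral> z. f z \<partial>lborel) * t = t" using fT[of UNIV] int_pm by simp
  have gT0: "(\<integral> z. indicator B z * g z \<partial>lborel) = 0" if "t = 0" "B \<in> sets borel" for B
  proof -
    have "0 \<le> (\<integral> z. indicator B z * g z \<partial>lborel)" "(\<integral> z. indicator B z * g z \<partial>lborel) \<le> t"
      using int_ind_le[of g B] iqm g0 that int_g by auto
    then show ?thesis using that by simp
  qed
  have Kmeas: "K \<in> measurable (count_space UNIV) (subprob_algebra (borel \<Otimes>\<^sub>M borel))"
  proof -
    have "subprob_space K1"
    proof
      have spK1: "space K1 = UNIV" using sets_eq_imp_space_eq[OF sK1] by (simp add: space_pair_measure)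
      have U: "UNIV \<in> sets (borel \<Otimes>\<^sub>M borel)" using sets.top[of "borel \<Otimes>\<^sub>M borel"] by (simp add: space_pair_measure)
      have "emeasure K1 (space K1) = ennreal (1 - t)"
        using K1T[OF U] int_m spK1 by simp
      also have "\<dots> \<le> 1" using t0 by simp
      finally show "emeasure K1 (space K1) \<le> 1" .
      show "space K1 \<noteq> {}" by (simp add: K1_def space_pair_measure)
    qed
    moreover have "subprob_space K2"
    proof
      have sp: "space K2 = UNIV \<times> UNIV" using sK2 by (simp add: space_pair_measure cong: sets_eq_imp_space_eq)
      have "emeasure K2 (space K2) = ennreal ((\<integral> z. f z \<partial>lborel) * t)"
        unfolding sp using K2T[of UNIV UNIV] int_g t0 if' f0
        by (simp add: ennreal_mult integral_nonneg_AE)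
      also have "\<dots> = ennreal t" by (subst fint) (rule refl)
      also have "t \<le> 1"
      proof -
        have "0 \<le> (\<integral> z. m z \<partial>lborel)" using m0 by (simp add: integral_nonneg_AE)
        then show ?thesis using int_m by simp
      qed
      then have "ennreal t \<le> 1" by simp
      finally show "emeasure K2 (space K2) \<le> 1" .
      show "space K2 \<noteq> {}" using sp by simp
    qed
    ultimately show ?thesis using sK1 sK2 by (auto simp: K_def space_subprob_algebra)
  qed
  have sg: "sets \<gamma> = sets (borel \<Otimes>\<^sub>M borel)" unfolding \<gamma>_def
    by (rule sets_bind[where N="borel \<Otimes>\<^sub>M borel"]) (auto simp: K_def sK1 sK2)
  have spg: "space \<gamma> = UNIV" using sg by (simp add: space_pair_measure cong: sets_eq_imp_space_eq)
  have eg: "emeasure \<gamma> X = emeasure K1 X + emeasure K2 X" if "X \<in> sets (borel \<Otimes>\<^sub>M borel)" for X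
    unfolding \<gamma>_def using that Kmeas
    by (subst emeasure_bind[where N="borel \<Otimes>\<^sub>M borel"]) (auto simp: nn_integral_count_space_finite UNIV_bool K_def add.commute)
  have marg1: "distr \<gamma> borel fst = density lborel (\<lambda>z. ennreal (p z))"
  proof (rule measure_eqI)
    show "sets (distr \<gamma> borel fst) = sets (density lborel (\<lambda>z. ennreal (p z)))" by (simp only: sets_distr sets_density sets_lborel)
    fix A assume "A \<in> sets (distr \<gamma> borel fst)"
    then have A[measurable]: "A \<in> sets borel" by (simp only: sets_distr)
    have fstm: "fst \<in> measurable \<gamma> borel" using measurable_cong_sets[OF sg refl] measurable_fst by blast
    have AU: "fst -` A \<inter> space \<gamma> = A \<times> UNIV" using spg by auto
    have AUs: "A \<times> UNIV \<in> sets (borel \<Otimes>\<^sub>M borel)" by simp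
    have pre: "(\<lambda>x. (x, x)) -` (A \<times> UNIV) = A" by auto
    have e1: "emeasure (distr \<gamma> borel fst) A = emeasure \<gamma> (A \<times> UNIV)"
      by (subst emeasure_distr[OF fstm A]) (simp only: AU)
    have e2: "emeasure \<gamma> (A \<times> UNIV) = emeasure K1 (A \<times> UNIV) + emeasure K2 (A \<times> UNIV)" by (rule eg[OF AUs])
    have e3: "emeasure K1 (A \<times> UNIV) = ennreal (\<integral> z. indicator A z * m z \<partial>lborel)"
      by (simp only: K1T[OF AUs] pre)
    have e4: "emeasure K2 (A \<times> UNIV) = ennreal (\<integral> z. indicator A z * (p z - m z) \<partial>lborel)"
    proof -
      have "emeasure K2 (A \<times> UNIV) = ennreal (\<integral> z. indicator A z * f z \<partial>lborel) * ennreal (\<integral> z. g z \<partial>lborel)"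
        using K2T[OF A sets.top[of borel]] by (simp only: indicator_UNIV mult_1 space_borel)
      also have "\<dots> = ennreal ((\<integral> z. indicator A z * f z \<partial>lborel) * t)"
        using int_ind_le[OF f0 if', of A] by (simp add: int_g ennreal_mult')
      also have "\<dots> = ennreal (\<integral> z. indicator A z * (p z - m z) \<partial>lborel)" by (simp only: fT[OF A])
      finally show ?thesis .
    qed
    have e5: "ennreal (\<integral> z. indicator A z * m z \<partial>lborel) + ennreal (\<integral> z. indicator A z * (p z - m z) \<partial>lborel)
        = ennreal ((\<integral> z. indicator A z * m z \<partial>lborel) + (\<integral> z. indicator A z * (p z - m z) \<partial>lborel))"
      using int_ind_le[OF m0 im, of A] int_ind_le[of "\<lambda>z. p z - m z" A] ipm
      by (intro ennreal_plus[symmetric]) (auto simp: m_def)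
    have e6: "(\<integral> z. indicator A z * m z \<partial>lborel) + (\<integral> z. indicator A z * (p z - m z) \<partial>lborel)
        = (\<integral> z. indicator A z * p z \<partial>lborel)"
      using ind_int[OF im, of A] ind_int[OF ipm, of A]
      by (subst Bochner_Integration.integral_add[symmetric]) (auto simp: algebra_simps)
    have e7: "ennreal (\<integral> z. indicator A z * p z \<partial>lborel) = emeasure (density lborel (\<lambda>z. ennreal (p z))) A"
      by (simp add: emeasure_density_int[OF pm p0 ip])
    show "emeasure (distr \<gamma> borel fst) A = emeasure (density lborel (\<lambda>z. ennreal (p z))) A"
      unfolding e1 e2 e3 e4 e5 e6 e7 ..
  qed
  have marg2: "distr \<gamma> borel snd = density lborel (\<lambda>z. ennreal (q z))"
  proof (rule measure_eqI)
    show "sets (distr \<gamma> borel snd) = sets (density lborel (\<lambda>z. ennreal (q z)))" by (simp only: sets_distr sets_density sets_lborel)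
    fix B assume "B \<in> sets (distr \<gamma> borel snd)"
    then have B[measurable]: "B \<in> sets borel" by (simp only: sets_distr)
    have sndm: "snd \<in> measurable \<gamma> borel" using measurable_cong_sets[OF sg refl] measurable_snd by blast
    have BU: "snd -` B \<inter> space \<gamma> = UNIV \<times> B" using spg by auto
    have BUs: "UNIV \<times> B \<in> sets (borel \<Otimes>\<^sub>M borel)" by simp
    have pre: "(\<lambda>x. (x, x)) -` (UNIV \<times> B) = B" by auto
    have UB: "UNIV \<in> sets borel" by simp
    have gB: "ennreal ((\<integral> z. f z \<partial>lborel)) * ennreal (\<integral> z. indicator B z * g z \<partial>lborel) = ennreal (\<integral> z. indicator B z * g z \<partial>lborel)"
    proof (cases "t = 0")
      case True then show ?thesis using gT0[OF True B] by simp
    next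
      case False then have "(\<integral> z. f z \<partial>lborel) = 1" using fint by simp
      then show ?thesis by simp
    qed
    have e1: "emeasure (distr \<gamma> borel snd) B = emeasure \<gamma> (UNIV \<times> B)"
      by (subst emeasure_distr[OF sndm B]) (simp only: BU)
    have e2: "emeasure \<gamma> (UNIV \<times> B) = emeasure K1 (UNIV \<times> B) + emeasure K2 (UNIV \<times> B)" by (rule eg[OF BUs])
    have e3: "emeasure K1 (UNIV \<times> B) = ennreal (\<integral> z. indicator B z * m z \<partial>lborel)"
      by (simp only: K1T[OF BUs] pre)
    have e4: "emeasure K2 (UNIV \<times> B) = ennreal (\<integral> z. indicator B z * g z \<partial>lborel)"
      using K2T[OF UB B] gB by (simp only: indicator_UNIV mult_1)
    have e5: "ennreal (\<integral> z. indicator B z * m z \<partial>lborel) + ennreal (\<integral> z. indicator B z * g z \<partial>lborel)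
        = ennreal ((\<integral> z. indicator B z * m z \<partial>lborel) + (\<integral> z. indicator B z * g z \<partial>lborel))"
      using int_ind_le[OF m0 im, of B] int_ind_le[OF g0 iqm, of B]
      by (intro ennreal_plus[symmetric]) auto
    have e6: "(\<integral> z. indicator B z * m z \<partial>lborel) + (\<integral> z. indicator B z * g z \<partial>lborel)
        = (\<integral> z. indicator B z * q z \<partial>lborel)"
      using ind_int[OF im, of B] ind_int[OF iqm, of B]
      by (subst Bochner_Integration.integral_add[symmetric]) (auto simp: algebra_simps g_def)
    have e7: "ennreal (\<integral> z. indicator B z * q z \<partial>lborel) = emeasure (density lborel (\<lambda>z. ennreal (q z))) B"
      by (simp add: emeasure_density_int[OF qm q0 iq])
    show "emeasure (distr \<gamma> borel snd) B = emeasure (density lborel (\<lambda>z. ennreal (q z))) B"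
      unfolding e1 e2 e3 e4 e5 e6 e7 ..
  qed
  have probg: "prob_space \<gamma>"
  proof
    have fstm: "fst \<in> measurable \<gamma> borel" using measurable_cong_sets[OF sg refl] measurable_fst by blast
    have "emeasure (distr \<gamma> borel fst) UNIV = emeasure \<gamma> (fst -` UNIV \<inter> space \<gamma>)"
      by (rule emeasure_distr[OF fstm]) simp
    also have "fst -` UNIV \<inter> space \<gamma> = space \<gamma>" by simp
    finally have "emeasure \<gamma> (space \<gamma>) = emeasure (density lborel (\<lambda>z. ennreal (p z))) UNIV"
      by (simp only: marg1)
    also have "\<dots> = ennreal (\<integral> z. indicator UNIV z * p z \<partial>lborel)"
      by (rule emeasure_density_int[OF pm p0 ip]) simp
    also have "\<dots> = 1" using p by (simp only: indicator_UNIV mult_1 pd_def) simp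
    finally show "emeasure \<gamma> (space \<gamma>) = 1" .
  qed
  have coup: "\<gamma> \<in> couplings (density lborel (\<lambda>z. ennreal (p z))) (density lborel (\<lambda>z. ennreal (q z)))"
    unfolding couplings_def using probg sg marg1 marg2 by simp
  define Off where "Off = space (borel \<Otimes>\<^sub>M borel) - {x \<in> space (borel \<Otimes>\<^sub>M borel). fst x = (snd x :: 'a)}"
  have Offs: "Off \<in> sets (borel \<Otimes>\<^sub>M borel)"
  proof -
    have "{x \<in> space (borel \<Otimes>\<^sub>M borel). fst x = (snd x :: 'a)} \<in> sets (borel \<Otimes>\<^sub>M borel)"
      by (rule measurable_equality_set) (rule measurable_fst, rule measurable_snd)
    then show ?thesis unfolding Off_def by (rule sets.compl_sets)
  qed
  have D0: "0 \<le> D" using d0[of undefined undefined] dD[of undefined undefined] by simp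
  have "(\<integral>\<^sup>+ x. ennreal (d (fst x) (snd x)) \<partial>\<gamma>) \<le> (\<integral>\<^sup>+ x. ennreal D * indicator Off x \<partial>\<gamma>)"
  proof (rule nn_integral_mono)
    fix x :: "'a \<times> 'a"
    show "ennreal (d (fst x) (snd x)) \<le> ennreal D * indicator Off x"
    proof (cases "fst x = snd x")
      case True then show ?thesis using daa by simp
    next
      case False then have "x \<in> Off" by (simp add: Off_def space_pair_measure)
      then show ?thesis using dD[of "fst x" "snd x"] by (simp add: ennreal_leI)
    qed
  qed
  also have "\<dots> = ennreal D * emeasure \<gamma> Off"
    using Offs sg by (subst nn_integral_cmult_indicator) auto
  finally have c1: "(\<integral>\<^sup>+ x. ennreal (d (fst x) (snd x)) \<partial>\<gamma>) \<le> ennreal D * emeasure \<gamma> Off" .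
  have c2: "emeasure \<gamma> Off = emeasure K1 Off + emeasure K2 Off" by (rule eg[OF Offs])
  have c3: "emeasure K1 Off = 0"
  proof -
    have "(\<lambda>x. (x, x)) -` Off = {}" by (auto simp: Off_def)
    then show ?thesis by (simp add: K1T[OF Offs])
  qed
  have U2: "UNIV \<times> UNIV \<in> sets K2" using sets.top[of "borel \<Otimes>\<^sub>M borel"] sK2 by (simp add: space_pair_measure)
  have c4: "emeasure K2 Off \<le> emeasure K2 (UNIV \<times> UNIV)"
    by (rule emeasure_mono[OF _ U2]) simp
  have c5: "emeasure K2 (UNIV \<times> UNIV) = ennreal t"
  proof -
    have UB: "UNIV \<in> sets borel" by simp
    have "emeasure K2 (UNIV \<times> UNIV) = ennreal (\<integral> z. f z \<partial>lborel) * ennreal (\<integral> z. g z \<partial>lborel)"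
      using K2T[OF UB UB] by (simp only: indicator_UNIV mult_1)
    also have "\<dots> = ennreal ((\<integral> z. f z \<partial>lborel) * t)"
      using int_ind_le[OF f0 if', of UNIV] by (simp add: int_g ennreal_mult')
    also have "\<dots> = ennreal t" by (subst fint) (rule refl)
    finally show ?thesis .
  qed
  have "emeasure \<gamma> Off \<le> ennreal t" using c2 c3 c4 c5 by simp
  then have cost: "(\<integral>\<^sup>+ x. ennreal (d (fst x) (snd x)) \<partial>\<gamma>) \<le> ennreal D * ennreal t"
    using c1 by (meson mult_left_mono order_trans zero_le)
  have "W1 d (density lborel (\<lambda>z. ennreal (p z))) (density lborel (\<lambda>z. ennreal (q z))) \<le> (\<integral>\<^sup>+ x. ennreal (d (fst x) (snd x)) \<partial>\<gamma>)"
    unfolding W1_def by (rule INF_lower[OF coup])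
  also have "\<dots> \<le> ennreal (D * t)" using cost D0 by (simp only: ennreal_mult'[OF D0])
  finally show ?thesis by (simp add: t_def)
qed

lemma quad_nonneg:
  fixes G :: "real^'r^'r"
  assumes pd: "pos_def_mat G" and dz: "det G \<noteq> 0"
  shows "0 \<le> v \<bullet> (matrix_inv G *v v)"
proof -
  have "invertible G" using dz by (simp add: invertible_det_nz)
  then have "G ** matrix_inv G = mat 1"
    unfolding invertible_def matrix_inv_def by (rule someI_ex[THEN conjunct1])
  define u where "u = matrix_inv G *v v"
  have Gu: "G *v u = v" unfolding u_def
    by (simp add: matrix_vector_mul_assoc \<open>G ** matrix_inv G = mat 1\<close>)
  have "0 \<le> u \<bullet> (G *v u)"
    using pd unfolding pos_def_mat_def by (cases "u = 0") (auto intro: less_imp_le)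
  then show ?thesis using Gu by (simp add: u_def[symmetric] inner_commute)
qed

lemma unroll:
  fixes e L c :: "nat \<Rightarrow> real"
  assumes e0: "e 0 = 0" and step: "\<And>m. m < k \<Longrightarrow> e (Suc m) \<le> L (Suc m) * e m + c (Suc m)"
    and L0: "\<And>i. 0 \<le> L i"
  shows "e k \<le> (\<Sum>j=1..k. (\<Prod>i=j+1..k. L i) * c j)"
proof -
  have "n \<le> k \<Longrightarrow> e n \<le> (\<Sum>j=1..n. (\<Prod>i=j+1..n. L i) * c j)" for n
  proof (induction n)
    case 0 then show ?case using e0 by simp
  next
    case (Suc n)
    then have IH: "e n \<le> (\<Sum>j=1..n. (\<Prod>i=j+1..n. L i) * c j)" by simp
    have "e (Suc n) \<le> L (Suc n) * e n + c (Suc n)" using step Suc.prems by simp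
    also have "\<dots> \<le> L (Suc n) * (\<Sum>j=1..n. (\<Prod>i=j+1..n. L i) * c j) + c (Suc n)"
      using IH L0 by (intro add_right_mono mult_left_mono) auto
    also have "L (Suc n) * (\<Sum>j=1..n. (\<Prod>i=j+1..n. L i) * c j) = (\<Sum>j=1..n. (\<Prod>i=j+1..Suc n. L i) * c j)"
      unfolding sum_distrib_left
    proof (intro sum.cong refl)
      fix j assume "j \<in> {1..n}"
      then have "(\<Prod>i=j+1..Suc n. L i) = (\<Prod>i=j+1..n. L i) * L (Suc n)"
        by (subst prod.cl_ivl_Suc) auto
      then show "L (Suc n) * ((\<Prod>i=j+1..n. L i) * c j) = (\<Prod>i=j+1..Suc n. L i) * c j" by simp
    qed
    also have "(\<Sum>j=1..n. (\<Prod>i=j+1..Suc n. L i) * c j) + c (Suc n) = (\<Sum>j=1..Suc n. (\<Prod>i=j+1..Suc n. L i) * c j)"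
      by (subst sum.cl_ivl_Suc) auto
    finally show ?case .
  qed
  then show ?thesis by simp
qed

lemma sqrt_prod: "sqrt (prod f A) = (\<Prod>i\<in>A. sqrt (f i))"
  by (induction A rule: infinite_finite_induct) (simp_all add: real_sqrt_mult)

lemma sqrt_powr: "(x::real) \<noteq> 0 \<Longrightarrow> sqrt (x powr c) = x powr (c / 2)"
proof -
  assume x: "x \<noteq> 0"
  have "(x powr (c / 2))\<^sup>2 = x powr c" using x by (simp add: powr_power)
  then show ?thesis using real_sqrt_unique[of "x powr (c / 2)" "x powr c"] by simp
qed

locale model = filt T for T :: "nat \<Rightarrow> 'x::euclidean_space \<Rightarrow> 'x \<Rightarrow> 'w::euclidean_space \<Rightarrow> real" +
  fixes \<Phi> :: "nat \<Rightarrow> 'x \<Rightarrow> 'w \<Rightarrow> real^'r" and \<Gamma> :: "real^'r^'r" and y :: "nat \<Rightarrow> real^'r"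
  assumes \<Phi>_meas: "\<And>i. (\<lambda>(x, w). \<Phi> i x w) \<in> borel_measurable borel"
    and \<Gamma>_pd: "pos_def_mat \<Gamma>" and detnz: "det \<Gamma> \<noteq> 0"
begin

definition H :: real where "H = (2 * pi) powr (- real CARD('r) / 2) * det \<Gamma> powr (- 1 / 2)"

lemma H_pos: "0 < H"
  unfolding H_def using detnz by simp

lemma lnH: "ln H = - (real CARD('r) / 2) * ln (2 * pi) - 1 / 2 * ln (det \<Gamma>)"
proof -
  have "ln H = ln ((2 * pi) powr (- real CARD('r) / 2)) + ln (det \<Gamma> powr (- 1 / 2))"
    unfolding H_def using detnz by (simp add: ln_mult)
  then show ?thesis by simp
qed

abbreviation h :: "nat \<Rightarrow> 'x \<times> 'w \<Rightarrow> real" where "h i \<equiv> lik \<Phi> \<Gamma> y i"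

lemma h_meas[measurable]: "h i \<in> borel_measurable borel"
proof -
  have [measurable]: "(\<lambda>z. \<Phi> i (fst z) (snd z)) \<in> borel_measurable borel"
    using \<Phi>_meas[of i] by (simp add: split_beta')
  have c: "continuous_on UNIV (\<lambda>v::real^'r. v \<bullet> (matrix_inv \<Gamma> *v v))"
    by (intro continuous_intros linear_continuous_on matrix_vector_mul_linear_gen bounded_linear_inner_right
        bounded_linear.continuous_on[OF matrix_vector_mul_bounded_linear]) 
  have [measurable]: "(\<lambda>v::real^'r. v \<bullet> (matrix_inv \<Gamma> *v v)) \<in> borel_measurable borel"
    using c by (rule borel_measurable_continuous_onI)
  show ?thesis unfolding lik_def[abs_def] gauss_dens_def by measurable
qed

lemma h_pos: "0 < h i z"
  unfolding lik_def gauss_dens_def using detnz by simp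

lemma h_le: "h i z \<le> H"
proof -
  have "0 \<le> (y i - \<Phi> i (fst z) (snd z)) \<bullet> (matrix_inv \<Gamma> *v (y i - \<Phi> i (fst z) (snd z)))"
    by (rule quad_nonneg[OF \<Gamma>_pd detnz])
  then have "exp (- (1 / 2) * ((y i - \<Phi> i (fst z) (snd z)) \<bullet> (matrix_inv \<Gamma> *v (y i - \<Phi> i (fst z) (snd z))))) \<le> 1"
    by simp
  then show ?thesis unfolding lik_def gauss_dens_def H_def
    using H_pos[unfolded H_def] by (simp add: mult_left_le)
qed

definition Zr :: "nat \<Rightarrow> ('x \<times> 'w \<Rightarrow> real) \<Rightarrow> real" where
  "Zr i \<pi> = enn2real (evid T \<Phi> \<Gamma> y i \<pi>)"

abbreviation post where "post i \<pi> \<equiv> post_op T \<Phi> \<Gamma> y i \<pi>"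

lemma adm_facts:
  assumes adm: "admissible T \<Phi> \<Gamma> y i \<pi>"
  shows "pd \<pi>" "\<And>z. pred T i \<pi> z < \<infinity>" "pd (prd i \<pi>)"
    "Zr i \<pi> = (\<integral> z. h i z * prd i \<pi> z \<partial>lborel)" "0 < Zr i \<pi>" "Zr i \<pi> \<le> H"
    "post i \<pi> = (\<lambda>z. h i z * prd i \<pi> z / Zr i \<pi>)" "pd (post i \<pi>)"
proof -
  show pdpi: "pd \<pi>" using adm by (simp add: admissible_def prob_dens_pd)
  show fin: "\<And>z. pred T i \<pi> z < \<infinity>" using adm by (auto simp: admissible_def)
  show pdp: "pd (prd i \<pi>)" using prd_pd[OF pdpi fin] .
  have pm[measurable]: "prd i \<pi> \<in> borel_measurable borel" using pdp by (simp add: pd_def)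
  have ip: "integrable lborel (prd i \<pi>)" using pdp by (simp add: pd_def)
  have ihp: "integrable lborel (\<lambda>z. h i z * prd i \<pi> z)"
    by (rule int_hmult[OF _ _ h_le ip]) (auto intro: less_imp_le h_pos)
  have ev: "evid T \<Phi> \<Gamma> y i \<pi> = ennreal (\<integral> z. h i z * prd i \<pi> z \<partial>lborel)"
  proof -
    have "evid T \<Phi> \<Gamma> y i \<pi> = (\<integral>\<^sup>+ z. ennreal (h i z * prd i \<pi> z) \<partial>lborel)"
      unfolding evid_def
    proof (intro nn_integral_cong)
      fix z
      have "pred T i \<pi> z = ennreal (prd i \<pi> z)" using fin[of z] by (simp add: prd_def less_top[symmetric])
      then show "ennreal (lik \<Phi> \<Gamma> y i z) * pred T i \<pi> z = ennreal (h i z * prd i \<pi> z)"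
        using h_pos[of i z] by (simp add: ennreal_mult prd_nonneg)
    qed
    also have "\<dots> = ennreal (\<integral> z. h i z * prd i \<pi> z \<partial>lborel)"
      using ihp h_pos by (intro nn_integral_eq_integral) (auto simp: prd_nonneg less_imp_le)
    finally show ?thesis .
  qed
  have int0: "0 \<le> (\<integral> z. h i z * prd i \<pi> z \<partial>lborel)"
    using h_pos by (intro integral_nonneg_AE) (auto simp: prd_nonneg less_imp_le)
  show Z: "Zr i \<pi> = (\<integral> z. h i z * prd i \<pi> z \<partial>lborel)" unfolding Zr_def ev using int0 by simp
  have "0 < evid T \<Phi> \<Gamma> y i \<pi>" using adm by (simp add: admissible_def)
  then show Zp: "0 < Zr i \<pi>" using Z ev by simp
  have "(\<integral> z. h i z * prd i \<pi> z \<partial>lborel) \<le> (\<integral> z. H * prd i \<pi> z \<partial>lborel)"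
    using ihp ip h_le by (intro integral_mono) (auto intro: mult_right_mono simp: prd_nonneg)
  also have "\<dots> = H" using pdp by (simp add: pd_def)
  finally show "Zr i \<pi> \<le> H" using Z by simp
  show post: "post i \<pi> = (\<lambda>z. h i z * prd i \<pi> z / Zr i \<pi>)"
    by (simp add: fun_eq_iff post_op_def prd_def Zr_def)
  show "pd (post i \<pi>)" unfolding post pd_def
    using ihp Zp Z h_pos by (auto simp: prd_nonneg less_imp_le)
qed

lemma dH_sym: "dH p q = dH q p"
  unfolding dH_def by (simp add: power2_commute)

lemma step_tv:
  assumes a1: "admissible T \<Phi> \<Gamma> y i \<mu>" and a2: "admissible T \<Phi> \<Gamma> y i \<nu>"
  shows "tv (post i \<mu>) (post i \<nu>) \<le> H / Zr i \<mu> * tv \<mu> \<nu>"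
proof -
  note f1 = adm_facts[OF a1] and f2 = adm_facts[OF a2]
  have "tv (post i \<mu>) (post i \<nu>) \<le> H / Zr i \<mu> * tv (prd i \<mu>) (prd i \<nu>)"
    unfolding f1(7) f2(7)
    by (rule bayes_tv[OF _ _ h_le f1(3) f2(3) f1(4) f1(5) f2(4) f2(5)]) (auto intro: less_imp_le h_pos)
  also have "\<dots> \<le> H / Zr i \<mu> * tv \<mu> \<nu>"
    using tv_contract[OF f1(1) f2(1) f1(2) f2(2)] H_pos f1(5) by (intro mult_left_mono) auto
  finally show ?thesis .
qed

lemma step_tv':
  assumes a1: "admissible T \<Phi> \<Gamma> y i \<mu>" and a2: "admissible T \<Phi> \<Gamma> y i \<nu>"
  shows "tv (post i \<mu>) (post i \<nu>) \<le> H / Zr i \<nu> * tv \<mu> \<nu>"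
  using step_tv[OF a2 a1] tv_sym[OF adm_facts(8)[OF a1] adm_facts(8)[OF a2]]
    tv_sym[OF adm_facts(1)[OF a1] adm_facts(1)[OF a2]] by simp

lemma step_hel:
  assumes a1: "admissible T \<Phi> \<Gamma> y i \<mu>" and a2: "admissible T \<Phi> \<Gamma> y i \<nu>"
  shows "dH (post i \<mu>) (post i \<nu>) \<le> 2 * sqrt (H / Zr i \<mu>) * dH \<mu> \<nu>"
proof -
  note f1 = adm_facts[OF a1] and f2 = adm_facts[OF a2]
  have "dH (post i \<mu>) (post i \<nu>) \<le> 2 * sqrt (H / Zr i \<mu>) * dH (prd i \<mu>) (prd i \<nu>)"
    unfolding f1(7) f2(7)
    by (rule bayes_hel[OF _ _ h_le f1(3) f2(3) f1(4) f1(5) f2(4) f2(5)]) (auto intro: less_imp_le h_pos)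
  also have "\<dots> \<le> 2 * sqrt (H / Zr i \<mu>) * dH \<mu> \<nu>"
    using hel_contract[OF f1(1) f2(1) f1(2) f2(2)] H_pos f1(5) by (intro mult_left_mono) auto
  finally show ?thesis .
qed

lemma step_hel':
  assumes a1: "admissible T \<Phi> \<Gamma> y i \<mu>" and a2: "admissible T \<Phi> \<Gamma> y i \<nu>"
  shows "dH (post i \<mu>) (post i \<nu>) \<le> 2 * sqrt (H / Zr i \<nu>) * dH \<mu> \<nu>"
  using step_hel[OF a2 a1] dH_sym by metis

lemma step_kl:
  fixes q :: "nat \<Rightarrow> 'x \<times> 'w \<Rightarrow> real"
  assumes i: "1 \<le> i" and adm: "admissible T \<Phi> \<Gamma> y i (q (i - 1))" and qi: "prob_dens (q i)"
    and el: "elbo_ge T \<Phi> \<Gamma> y q i \<epsilon>"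
  shows "tv (post i (q (i - 1))) (q i) \<le> sqrt (ln H - \<epsilon>) / sqrt 2"
    "dH (post i (q (i - 1))) (q i) \<le> sqrt (ln H - \<epsilon>) / sqrt 2"
proof -
  note f = adm_facts[OF adm]
  have pq: "pd (q i)" using qi by (rule prob_dens_pd)
  define E where "E = (\<integral> z. q i z * ln (h i z * prd i (q (i - 1)) z) \<partial>lborel) - (\<integral> z. q i z * ln (q i z) \<partial>lborel)"
  have elb: "(AE z in lborel. 0 < q i z \<longrightarrow> 0 < pred T i (q (i - 1)) z \<and> pred T i (q (i - 1)) z < \<infinity>)"
    "integrable lborel (\<lambda>z. q i z * ln (h i z * prd i (q (i - 1)) z))"
    "integrable lborel (\<lambda>z. q i z * ln (q i z))" "\<epsilon> \<le> E"
    using el unfolding elbo_ge_def E_def prd_def by auto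
  have ae: "AE z in lborel. 0 < q i z \<longrightarrow> 0 < prd i (q (i - 1)) z"
    using elb(1) by eventually_elim (auto simp: prd_def enn2real_positive_iff)
  have hm: "h i \<in> borel_measurable lborel" by simp
  note kl = kl_bounds[OF pq f(3) hm h_pos h_le f(4) f(5) ae elb(2) elb(3) E_def]
  have lnZ: "ln (Zr i (q (i - 1))) \<le> ln H" using f(5) f(6) by simp
  have bound: "ln (Zr i (q (i - 1))) - E \<le> ln H - \<epsilon>" using lnZ elb(4) by simp
  have r: "(\<lambda>z. h i z * prd i (q (i - 1)) z / Zr i (q (i - 1))) = post i (q (i - 1))" using f(7) by simp
  have t1: "2 * (tv (q i) (post i (q (i - 1))))\<^sup>2 \<le> ln H - \<epsilon>" using kl(1) bound r by simp
  have t2: "tv (post i (q (i - 1))) (q i) = tv (q i) (post i (q (i - 1)))" using tv_sym[OF f(8) pq] .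
  have "tv (post i (q (i - 1))) (q i) \<le> sqrt ((ln H - \<epsilon>) / 2)"
    using t1 t2 tv_nonneg by (intro real_le_rsqrt) simp
  then show "tv (post i (q (i - 1))) (q i) \<le> sqrt (ln H - \<epsilon>) / sqrt 2" by (simp add: real_sqrt_divide)
  have h2: "(\<integral> z. (sqrt (q i z) - sqrt (post i (q (i - 1)) z))\<^sup>2 \<partial>lborel) \<le> ln H - \<epsilon>"
    unfolding f(7) using kl(2) bound by linarith
  have "dH (q i) (post i (q (i - 1))) \<le> sqrt (1 / 2 * (ln H - \<epsilon>))"
    unfolding dH_def using h2 by (intro real_sqrt_le_mono) simp
  then have "dH (q i) (post i (q (i - 1))) \<le> sqrt (ln H - \<epsilon>) / sqrt 2"
    by (simp add: real_sqrt_divide real_sqrt_mult)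
  then show "dH (post i (q (i - 1))) (q i) \<le> sqrt (ln H - \<epsilon>) / sqrt 2"
    by (metis dH_sym)
qed

lemma main_bounds:
  fixes q :: "nat \<Rightarrow> 'x \<times> 'w \<Rightarrow> real" and \<epsilon> :: "nat \<Rightarrow> real" and k :: nat
  defines "P \<equiv> exact_post T \<Phi> \<Gamma> y (q 0)"
  assumes k_pos: "1 \<le> k"
    and P0: "prob_dens (q 0)"
    and Q_dens: "\<forall>i\<in>{1..k}. prob_dens (q i)"
    and elbo: "\<forall>i\<in>{1..k}. elbo_ge T \<Phi> \<Gamma> y q i (\<epsilon> i)"
    and P_adm: "\<forall>i<k. admissible T \<Phi> \<Gamma> y (Suc i) (P i)"
    and Q_adm: "\<forall>i\<in>{1..<k}. admissible T \<Phi> \<Gamma> y (Suc i) (q i)"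
  shows "pd (P k)" "pd (q k)"
    "tv (P k) (q k) \<le> (\<Sum>j=1..k. (\<Prod>i=j+1..k. H / Zr i (P (i - 1))) * (sqrt (ln H - \<epsilon> j) / sqrt 2))"
    "tv (P k) (q k) \<le> (\<Sum>j=1..k. (\<Prod>i=j+1..k. H / Zr i (q (i - 1))) * (sqrt (ln H - \<epsilon> j) / sqrt 2))"
    "dH (P k) (q k) \<le> (\<Sum>j=1..k. (\<Prod>i=j+1..k. 2 * sqrt (H / Zr i (P (i - 1)))) * (sqrt (ln H - \<epsilon> j) / sqrt 2))"
    "dH (P k) (q k) \<le> (\<Sum>j=1..k. (\<Prod>i=j+1..k. 2 * sqrt (H / Zr i (q (i - 1)))) * (sqrt (ln H - \<epsilon> j) / sqrt 2))"
proof -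
  have P_0: "P 0 = q 0" by (simp add: P_def)
  have P_Suc: "P (Suc m) = post (Suc m) (P m)" for m by (simp add: P_def)
  have QA: "admissible T \<Phi> \<Gamma> y (Suc m) (q m)" if "m < k" for m
  proof (cases "m = 0")
    case True then show ?thesis using P_adm that P_0 by auto
  next
    case False then show ?thesis using Q_adm that by auto
  qed
  have PA: "admissible T \<Phi> \<Gamma> y (Suc m) (P m)" if "m < k" for m using P_adm that by auto
  have pdP: "pd (P (Suc m))" if "m < k" for m unfolding P_Suc using adm_facts(8)[OF PA[OF that]] .
  have pdQ: "pd (q (Suc m))" if "m < k" for m using Q_dens that by (auto intro: prob_dens_pd)
  have pdQP: "pd (post (Suc m) (q m))" if "m < k" for m using adm_facts(8)[OF QA[OF that]] .
  have kl: "tv (post (Suc m) (q m)) (q (Suc m)) \<le> sqrt (ln H - \<epsilon> (Suc m)) / sqrt 2"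
    "dH (post (Suc m) (q m)) (q (Suc m)) \<le> sqrt (ln H - \<epsilon> (Suc m)) / sqrt 2" if "m < k" for m
    using step_kl[of "Suc m" q, OF _ _ _ , simplified, OF QA[OF that]] Q_dens elbo that by auto
  have k1: "k = Suc (k - 1)" using k_pos by simp
  show "pd (P k)" using pdP[of "k - 1"] k1 k_pos by (metis diff_less zero_less_one le_less_trans less_numeral_extra(1) not_le)
  show "pd (q k)" using pdQ[of "k - 1"] k1 k_pos by (metis diff_less zero_less_one le_less_trans less_numeral_extra(1) not_le)
  have tvstep: "tv (P (Suc m)) (q (Suc m)) \<le> L * tv (P m) (q m) + sqrt (ln H - \<epsilon> (Suc m)) / sqrt 2"
    if "m < k" and L: "tv (post (Suc m) (P m)) (post (Suc m) (q m)) \<le> L * tv (P m) (q m)" for m L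
  proof -
    have "tv (P (Suc m)) (q (Suc m)) \<le> tv (P (Suc m)) (post (Suc m) (q m)) + tv (post (Suc m) (q m)) (q (Suc m))"
      using pdP[OF that(1)] pdQ[OF that(1)] pdQP[OF that(1)] by (intro tv_triangle) (auto simp: pd_def)
    then show ?thesis using L kl(1)[OF that(1)] unfolding P_Suc by linarith
  qed
  have hstep: "dH (P (Suc m)) (q (Suc m)) \<le> L * dH (P m) (q m) + sqrt (ln H - \<epsilon> (Suc m)) / sqrt 2"
    if "m < k" and L: "dH (post (Suc m) (P m)) (post (Suc m) (q m)) \<le> L * dH (P m) (q m)" for m L
  proof -
    have "dH (P (Suc m)) (q (Suc m)) \<le> dH (P (Suc m)) (post (Suc m) (q m)) + dH (post (Suc m) (q m)) (q (Suc m))"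
      using pdP[OF that(1)] pdQ[OF that(1)] pdQP[OF that(1)] by (intro dH_triangle)
    then show ?thesis using L kl(2)[OF that(1)] unfolding P_Suc by linarith
  qed
  have e0: "tv (P 0) (q 0) = 0" "dH (P 0) (q 0) = 0" by (simp_all add: P_0 tv_self dH_def)
  have Z0: "0 \<le> H / Zr i \<pi>" for i \<pi> using H_pos by (simp add: Zr_def)
  show "tv (P k) (q k) \<le> (\<Sum>j=1..k. (\<Prod>i=j+1..k. H / Zr i (P (i - 1))) * (sqrt (ln H - \<epsilon> j) / sqrt 2))"
    by (rule unroll[where e="\<lambda>m. tv (P m) (q m)", OF e0(1)])
       (use tvstep[OF _ step_tv[OF PA QA]] Z0 in simp_all)
  show "tv (P k) (q k) \<le> (\<Sum>j=1..k. (\<Prod>i=j+1..k. H / Zr i (q (i - 1))) * (sqrt (ln H - \<epsilon> j) / sqrt 2))"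
    by (rule unroll[where e="\<lambda>m. tv (P m) (q m)", OF e0(1)])
       (use tvstep[OF _ step_tv'[OF PA QA]] Z0 in simp_all)
  show "dH (P k) (q k) \<le> (\<Sum>j=1..k. (\<Prod>i=j+1..k. 2 * sqrt (H / Zr i (P (i - 1)))) * (sqrt (ln H - \<epsilon> j) / sqrt 2))"
    by (rule unroll[where e="\<lambda>m. dH (P m) (q m)", OF e0(2)])
       (use hstep[OF _ step_hel[OF PA QA]] Z0 in simp_all)
  show "dH (P k) (q k) \<le> (\<Sum>j=1..k. (\<Prod>i=j+1..k. 2 * sqrt (H / Zr i (q (i - 1)))) * (sqrt (ln H - \<epsilon> j) / sqrt 2))"
    by (rule unroll[where e="\<lambda>m. dH (P m) (q m)", OF e0(2)])
       (use hstep[OF _ step_hel'[OF PA QA]] Z0 in simp_all)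
qed

lemma g_pow: "(2 * pi) powr (- (real CARD('r) * real n) / 2) * det \<Gamma> powr (- real n / 2) = H ^ n"
proof -
  have "H ^ n = ((2 * pi) powr (- real CARD('r) / 2)) ^ n * (det \<Gamma> powr (- 1 / 2)) ^ n"
    unfolding H_def by (simp add: power_mult_distrib)
  also have "\<dots> = (2 * pi) powr (real n * (- real CARD('r) / 2)) * det \<Gamma> powr (real n * (- 1 / 2))"
    using detnz by (simp add: powr_power)
  finally show ?thesis by (simp add: algebra_simps)
qed

lemma sqrtH: "sqrt H = (2 * pi) powr (- real CARD('r) / 4) * det \<Gamma> powr (- 1 / 4)"
  unfolding H_def using detnz by (simp add: real_sqrt_mult sqrt_powr)

lemma gH_pow: "2 ^ n * (2 * pi) powr (- (real CARD('r) * real n) / 4) * det \<Gamma> powr (- real n / 4) = 2 ^ n * sqrt H ^ n"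
proof -
  have "sqrt H ^ n = ((2 * pi) powr (- real CARD('r) / 4)) ^ n * (det \<Gamma> powr (- 1 / 4)) ^ n"
    unfolding sqrtH by (simp add: power_mult_distrib)
  also have "\<dots> = (2 * pi) powr (real n * (- real CARD('r) / 4)) * det \<Gamma> powr (real n * (- 1 / 4))"
    using detnz by (simp add: powr_power)
  finally show ?thesis by (simp add: algebra_simps)
qed

lemma split_last:
  fixes X :: "nat \<Rightarrow> real"
  assumes "1 \<le> k"
  shows "(\<Sum>j=1..k. X j) = (\<Sum>j=1..<k. X j) + X k"
proof -
  obtain n where n: "k = Suc n" using assms by (cases k) auto
  show ?thesis unfolding n by (simp add: sum.cl_ivl_Suc atLeastLessThanSuc_atLeastAtMost)
qed

lemma conv_tv:
  fixes Z S :: "nat \<Rightarrow> real"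
  assumes "1 \<le> k"
  shows "(\<Sum>j=1..k. (\<Prod>i=j+1..k. H / Z i) * (S j / sqrt 2))
    = (\<Sum>j=1..<k. (2 * pi) powr (- (real CARD('r) * real (k - j)) / 2) * det \<Gamma> powr (- real (k - j) / 2)
          / (sqrt 2 * (\<Prod>i\<in>{j+1..k}. Z i)) * S j) + 1 / sqrt 2 * S k"
proof -
  have "(\<Sum>j=1..k. (\<Prod>i=j+1..k. H / Z i) * (S j / sqrt 2))
      = (\<Sum>j=1..<k. (\<Prod>i=j+1..k. H / Z i) * (S j / sqrt 2)) + 1 / sqrt 2 * S k"
    using split_last[OF assms] by simp
  also have "(\<Sum>j=1..<k. (\<Prod>i=j+1..k. H / Z i) * (S j / sqrt 2))
      = (\<Sum>j=1..<k. (2 * pi) powr (- (real CARD('r) * real (k - j)) / 2) * det \<Gamma> powr (- real (k - j) / 2)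
          / (sqrt 2 * (\<Prod>i\<in>{j+1..k}. Z i)) * S j)"
  proof (intro sum.cong refl)
    fix j assume "j \<in> {1..<k}"
    have "(\<Prod>i=j+1..k. H / Z i) = H ^ (k - j) / (\<Prod>i=j+1..k. Z i)"
      by (simp add: prod_dividef)
    then show "(\<Prod>i=j+1..k. H / Z i) * (S j / sqrt 2) = (2 * pi) powr (- (real CARD('r) * real (k - j)) / 2) * det \<Gamma> powr (- real (k - j) / 2)
          / (sqrt 2 * (\<Prod>i\<in>{j+1..k}. Z i)) * S j"
      unfolding g_pow by simp
  qed
  finally show ?thesis .
qed

lemma conv_hel:
  fixes Z S :: "nat \<Rightarrow> real"
  assumes "1 \<le> k" and Z0: "\<And>i. 0 \<le> Z i"
  shows "(\<Sum>j=1..k. (\<Prod>i=j+1..k. 2 * sqrt (H / Z i)) * (S j / sqrt 2))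
    = (\<Sum>j=1..<k. 2 ^ (k - j) * (2 * pi) powr (- (real CARD('r) * real (k - j)) / 4) * det \<Gamma> powr (- real (k - j) / 4)
          / sqrt (2 * (\<Prod>i\<in>{j+1..k}. Z i)) * S j) + 1 / sqrt 2 * S k"
    and "(\<Sum>j=1..k. (\<Prod>i=j+1..k. 2 * sqrt (H / Z i)) * (S j / sqrt 2))
    = (\<Sum>j=1..<k. 2 ^ (k - j) * (2 * pi) powr (- (real CARD('r) * real (k - j)) / 4) * det \<Gamma> powr (- real (k - j) / 4)
          / (sqrt 2 * (\<Prod>i\<in>{j+1..k}. sqrt (Z i))) * S j) + 1 / sqrt 2 * S k"
proof -
  have p: "(\<Prod>i=j+1..k. 2 * sqrt (H / Z i)) = 2 ^ (k - j) * sqrt H ^ (k - j) / (\<Prod>i=j+1..k. sqrt (Z i))" for j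
    by (simp add: prod.distrib prod_dividef real_sqrt_divide)
  have base: "(\<Sum>j=1..k. (\<Prod>i=j+1..k. 2 * sqrt (H / Z i)) * (S j / sqrt 2))
      = (\<Sum>j=1..<k. (\<Prod>i=j+1..k. 2 * sqrt (H / Z i)) * (S j / sqrt 2)) + 1 / sqrt 2 * S k"
    using split_last[OF assms(1)] by simp
  show "(\<Sum>j=1..k. (\<Prod>i=j+1..k. 2 * sqrt (H / Z i)) * (S j / sqrt 2))
    = (\<Sum>j=1..<k. 2 ^ (k - j) * (2 * pi) powr (- (real CARD('r) * real (k - j)) / 4) * det \<Gamma> powr (- real (k - j) / 4)
          / (sqrt 2 * (\<Prod>i\<in>{j+1..k}. sqrt (Z i))) * S j) + 1 / sqrt 2 * S k"
    apply (subst base)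
    unfolding gH_pow p by (simp add: mult.commute)
  moreover have "sqrt (2 * (\<Prod>i\<in>{j+1..k}. Z i)) = sqrt 2 * (\<Prod>i\<in>{j+1..k}. sqrt (Z i))" for j
    by (simp add: real_sqrt_mult sqrt_prod)
  ultimately show "(\<Sum>j=1..k. (\<Prod>i=j+1..k. 2 * sqrt (H / Z i)) * (S j / sqrt 2))
    = (\<Sum>j=1..<k. 2 ^ (k - j) * (2 * pi) powr (- (real CARD('r) * real (k - j)) / 4) * det \<Gamma> powr (- real (k - j) / 4)
          / sqrt (2 * (\<Prod>i\<in>{j+1..k}. Z i)) * S j) + 1 / sqrt 2 * S k"
    by simp
qed

end

theorem corollary1:
  fixes T :: "nat \<Rightarrow> 'x::euclidean_space \<Rightarrow> 'x \<Rightarrow> 'w::euclidean_space \<Rightarrow> real"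
    and \<Phi> :: "nat \<Rightarrow> 'x \<Rightarrow> 'w \<Rightarrow> real^'r"
    and \<Gamma> :: "real^'r^'r"
    and y :: "nat \<Rightarrow> real^'r"
    and q :: "nat \<Rightarrow> 'x \<times> 'w \<Rightarrow> real"
    and \<epsilon> :: "nat \<Rightarrow> real"
    and k :: nat
    and d :: "'x \<times> 'w \<Rightarrow> 'x \<times> 'w \<Rightarrow> real"
  assumes T_meas: "\<forall>i. (\<lambda>(x, x', w). T i x x' w) \<in> borel_measurable borel"
    and T_nonneg: "\<forall>i x x' w. 0 \<le> T i x x' w"
    and T_dens: "\<forall>i x' w. (\<integral>\<^sup>+ x. ennreal (T i x x' w) \<partial>lborel) = 1"
    and \<Phi>_meas: "\<forall>i. (\<lambda>(x, w). \<Phi> i x w) \<in> borel_measurable borel"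
    and \<Gamma>_pd: "pos_def_mat \<Gamma>"
    and d_polish: "polish_metric d"
    and k_pos: "1 \<le> k"
    and P0: "prob_dens (q 0)"
    and Q_dens: "\<forall>i\<in>{1..k}. prob_dens (q i)"
    and elbo: "\<forall>i\<in>{1..k}. elbo_ge T \<Phi> \<Gamma> y q i (\<epsilon> i)"
    and P_adm: "\<forall>i<k. admissible T \<Phi> \<Gamma> y (Suc i) (exact_post T \<Phi> \<Gamma> y (q 0) i)"
    and Q_adm: "\<forall>i\<in>{1..<k}. admissible T \<Phi> \<Gamma> y (Suc i) (q i)"
  shows
    "let r = real CARD('r);
         P = exact_post T \<Phi> \<Gamma> y (q 0);
         PM = density lborel (\<lambda>z. ennreal (P k z));
         QM = density lborel (\<lambda>z. ennreal (q k z));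
         s = (\<lambda>i. sqrt (- (r / 2) * ln (2 * pi) - 1 / 2 * ln (det \<Gamma>) - \<epsilon> i));
         p = (\<lambda>j. \<Prod>i\<in>{j+1..k}. enn2real (evid T \<Phi> \<Gamma> y i (P (i - 1))));
         zq = (\<lambda>j. \<Prod>i\<in>{j+1..k}. enn2real (evid T \<Phi> \<Gamma> y i (q (i - 1))));
         sqz = (\<lambda>j. \<Prod>i\<in>{j+1..k}. sqrt (enn2real (evid T \<Phi> \<Gamma> y i (q (i - 1)))));
         g = (\<lambda>j. (2 * pi) powr (- (r * real (k - j)) / 2) * det \<Gamma> powr (- real (k - j) / 2));
         gH = (\<lambda>j. 2 ^ (k - j) * (2 * pi) powr (- (r * real (k - j)) / 4)
                    * det \<Gamma> powr (- real (k - j) / 4))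
     in (dTV PM QM \<le> (\<Sum>j=1..<k. g j / (sqrt 2 * p j) * s j) + 1 / sqrt 2 * s k
         \<and> dTV PM QM \<le> (\<Sum>j=1..<k. g j / (sqrt 2 * zq j) * s j) + 1 / sqrt 2 * s k)
      \<and> (dH (P k) (q k) \<le> (\<Sum>j=1..<k. gH j / sqrt (2 * p j) * s j) + 1 / sqrt 2 * s k
         \<and> dH (P k) (q k) \<le> (\<Sum>j=1..<k. gH j / (sqrt 2 * sqz j) * s j) + 1 / sqrt 2 * s k)
      \<and> (\<forall>D. bdd_above (range (\<lambda>(a, b). d a b)) \<and> D = (SUP (a, b). d a b) \<longrightarrow>
           W1 d PM QM \<le> ennreal ((\<Sum>j=1..<k. D * g j / (sqrt 2 * p j) * s j) + D / sqrt 2 * s k)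
         \<and> W1 d PM QM \<le> ennreal ((\<Sum>j=1..<k. D * g j / (sqrt 2 * zq j) * s j) + D / sqrt 2 * s k))"
proof -
  interpret filt T using T_meas T_nonneg T_dens by unfold_locales auto
  have detnz: "det \<Gamma> \<noteq> 0"
  proof
    assume d: "det \<Gamma> = 0"
    have "lik \<Phi> \<Gamma> y (Suc 0) z = 0" for z by (simp add: lik_def gauss_dens_def d)
    then have "evid T \<Phi> \<Gamma> y (Suc 0) (exact_post T \<Phi> \<Gamma> y (q 0) 0) = 0" by (simp add: evid_def)
    moreover have "0 < evid T \<Phi> \<Gamma> y (Suc 0) (exact_post T \<Phi> \<Gamma> y (q 0) 0)"
      using P_adm k_pos by (auto simp: admissible_def)
    ultimately show False by simp
  qed
  interpret model T \<Phi> \<Gamma> y using \<Phi>_meas \<Gamma>_pd detnz by unfold_locales auto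
  note mb = main_bounds[OF k_pos P0 Q_dens elbo P_adm Q_adm]
  define S where "S j = sqrt (- (real CARD('r) / 2) * ln (2 * pi) - 1 / 2 * ln (det \<Gamma>) - \<epsilon> j)" for j
  have S: "sqrt (ln H - \<epsilon> j) = S j" for j by (simp add: S_def lnH)
  define P where "P = exact_post T \<Phi> \<Gamma> y (q 0)"
  have dA: "\<forall>a b. 0 \<le> d a b" using d_polish unfolding polish_metric_def by (rule conjunct1)
  have dB: "\<forall>a b. d a b = 0 \<longleftrightarrow> a = b" using d_polish unfolding polish_metric_def by (rule conjunct1[OF conjunct2])
  have dpos: "\<And>a b. 0 \<le> d a b" using dA by blast
  have dzero: "\<And>a. d a a = 0" using dB by blast
  have Zp0: "0 \<le> enn2real (evid T \<Phi> \<Gamma> y i (P (i - 1)))" for i by simp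
  have Zq0: "0 \<le> enn2real (evid T \<Phi> \<Gamma> y i (q (i - 1)))" for i by simp
  have tv1: "tv (P k) (q k) \<le> (\<Sum>j=1..<k. (2 * pi) powr (- (real CARD('r) * real (k - j)) / 2) * det \<Gamma> powr (- real (k - j) / 2)
          / (sqrt 2 * (\<Prod>i\<in>{j+1..k}. enn2real (evid T \<Phi> \<Gamma> y i (P (i - 1))))) * S j) + 1 / sqrt 2 * S k"
    using mb(3) conv_tv[OF k_pos, where Z="\<lambda>i. enn2real (evid T \<Phi> \<Gamma> y i (P (i - 1)))" and S=S]
    unfolding P_def Zr_def S by simp
  have tv2: "tv (P k) (q k) \<le> (\<Sum>j=1..<k. (2 * pi) powr (- (real CARD('r) * real (k - j)) / 2) * det \<Gamma> powr (- real (k - j) / 2)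
          / (sqrt 2 * (\<Prod>i\<in>{j+1..k}. enn2real (evid T \<Phi> \<Gamma> y i (q (i - 1))))) * S j) + 1 / sqrt 2 * S k"
    using mb(4) conv_tv[OF k_pos, where Z="\<lambda>i. enn2real (evid T \<Phi> \<Gamma> y i (q (i - 1)))" and S=S]
    unfolding P_def Zr_def S by simp
  have h1: "dH (P k) (q k) \<le> (\<Sum>j=1..<k. 2 ^ (k - j) * (2 * pi) powr (- (real CARD('r) * real (k - j)) / 4) * det \<Gamma> powr (- real (k - j) / 4)
          / sqrt (2 * (\<Prod>i\<in>{j+1..k}. enn2real (evid T \<Phi> \<Gamma> y i (P (i - 1))))) * S j) + 1 / sqrt 2 * S k"
    using mb(5) conv_hel(1)[OF k_pos, where Z="\<lambda>i. enn2real (evid T \<Phi> \<Gamma> y i (P (i - 1)))" and S=S, OF Zp0]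
    unfolding P_def Zr_def S by simp
  have h2: "dH (P k) (q k) \<le> (\<Sum>j=1..<k. 2 ^ (k - j) * (2 * pi) powr (- (real CARD('r) * real (k - j)) / 4) * det \<Gamma> powr (- real (k - j) / 4)
          / (sqrt 2 * (\<Prod>i\<in>{j+1..k}. sqrt (enn2real (evid T \<Phi> \<Gamma> y i (q (i - 1)))))) * S j) + 1 / sqrt 2 * S k"
    using mb(6) conv_hel(2)[OF k_pos, where Z="\<lambda>i. enn2real (evid T \<Phi> \<Gamma> y i (q (i - 1)))" and S=S, OF Zq0]
    unfolding P_def Zr_def S by simp
  have pdP: "pd (P k)" and pdQ: "pd (q k)" using mb(1,2) by (simp_all add: P_def)
  have dtv: "dTV (density lborel (\<lambda>z. ennreal (P k z))) (density lborel (\<lambda>z. ennreal (q k z))) \<le> tv (P k) (q k)"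
    by (rule dTV_le_tv[OF pdP pdQ])
  have W: "W1 d (density lborel (\<lambda>z. ennreal (P k z))) (density lborel (\<lambda>z. ennreal (q k z))) \<le> ennreal (D * tv (P k) (q k))"
    if bdd: "bdd_above (range (\<lambda>(a, b). d a b))" and D: "D = (SUP (a, b). d a b)" for D
  proof (rule W1_le[OF pdP pdQ])
    show "0 \<le> d a b" for a b by (rule dpos)
    show "d a a = 0" for a by (rule dzero)
    show "d a b \<le> D" for a b
    proof -
      have "(\<lambda>(a, b). d a b) (a, b) \<le> (SUP (a, b). d a b)" by (rule cSUP_upper[OF _ bdd]) simp
      then show ?thesis using D by simp
    qed
  qed
  have D0: "0 \<le> D" if D: "D = (SUP (a, b). d a b)" and bdd: "bdd_above (range (\<lambda>(a, b). d a b))" for D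
  proof -
    have "(\<lambda>(a, b). d a b) (x, x) \<le> (SUP (a, b). d a b)" for x by (rule cSUP_upper[OF _ bdd]) simp
    moreover have "0 \<le> d x x" for x by (rule dpos)
    ultimately show ?thesis using D by (metis case_prod_conv order_trans)
  qed
  have Wfin: "W1 d (density lborel (\<lambda>z. ennreal (P k z))) (density lborel (\<lambda>z. ennreal (q k z))) \<le> ennreal (D * R)"
    if bdd: "bdd_above (range (\<lambda>(a, b). d a b))" and D: "D = (SUP (a, b). d a b)" and R: "tv (P k) (q k) \<le> R" for D R
  proof -
    have "ennreal (D * tv (P k) (q k)) \<le> ennreal (D * R)"
      using D0[OF D bdd] R by (intro ennreal_leI mult_left_mono) auto
    then show ?thesis using W[OF bdd D] by (rule order_trans[rotated])
  qed
  show ?thesis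
    unfolding Let_def S_def[symmetric] P_def[symmetric]
    apply (intro conjI allI impI)
    subgoal using dtv tv1 by linarith
    subgoal using dtv tv2 by linarith
    subgoal using h1 by simp
    subgoal using h2 by simp
    subgoal for D
      using Wfin[OF _ _ tv1, of D] by (simp add: sum_distrib_left algebra_simps)
    subgoal for D
      using Wfin[OF _ _ tv2, of D] by (simp add: sum_distrib_left algebra_simps)
    done
qed

end
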